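(* Let $\Lambda$ be a Khovanov block. The product $(a\lambda b)(c\mu d)$ of two basis vectors of $H_\Lambda$ is a linear combination of basis vectors of the form $(a\nu d)$ with $\nu\in\Lambda$ satisfying $\lambda\le\nu\ge\mu$ in the Bruhat order.
   Context: A number line carries vertices indexed by consecutive integers. A weight labels each vertex by $\circ,\times,\vee,\wedge$ (outside a finite set no $\vee$ left of an $\wedge$); bounded if finitely many vertices. Bruhat order: generated by declaring that interchanging a $\vee$ with an $\wedge$ to its right makes a weight bigger. Blocks: classes of weights related by permuting $\vee$'s and $\wedge$'s. Cup diagrams: finitely many non-crossing cups joining pairs of vertices and rays down to infinity; cap diagrams similarly upward; $c^*$ mirror image. $c\lambda$ is an oriented cup diagram if free vertices are $\circ/\times$, cups have one $\vee$ and one $\wedge$ end, ray vertices are $\vee/\wedge$, no two rays labelled $\vee,\wedge$ in that order left to right; $\lambda c$ (cap diagram) oriented iff $c^*\lambda$ is. Clockwise cup/cap: left end $\wedge$; degree = number of clockwise cups/caps. A circle diagram $ab$ (cup diagram $a$ below cap diagram $b$) is closed if it has no rays; oriented circle diagram $a\lambda b$: $a\lambda$, $\lambda b$ oriented. Circles: anticlockwise ($1$) if leftmost vertex $\vee$, clockwise ($x$) otherwise. A Khovanov block of rank $n$ is a block of bounded weights each with exactly $n$ $\wedge$'s and $n$ $\vee$'s. Khovanov's algebra $H_\Lambda$ has basis $(a\lambda b)$ for all closed oriented circle diagrams with $\lambda\in\Lambda$. Multiplication: $(a\lambda b)(c\mu d)=0$ if $b^*\ne c$; otherwise draw $a\lambda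 b$ below $c\mu d$ and iterate surgery: cut a cap of $b$ and its mirror cup of $c$ connectable without crossings and rejoin as two vertical segments; reorient via $1\otimes1\mapsto1$, $1\otimes x\mapsto x$, $x\otimes1\mapsto x$, $x\otimes x\mapsto0$ (merge), $1\mapsto1\otimes x+x\otimes1$, $x\mapsto x\otimes x$ (split); when the middle has no cups/caps, identify the two number lines to get diagrams $a\nu d$ and sum the corresponding basis vectors. *)

theory Defs
  imports Main
begin

text \<open>Labels of vertices: Nought = circle, Cross = cross, Down = vee, Up = wedge.\<close>
datatype lab = Nought | Cross | Down | Up

text \<open>A weight: partial labelling of the integers; the domain is the set of vertices
  of the number line.\<close>
type_synonym weight = "int \<Rightarrow> lab option"

definition is_weight :: "weight \<Rightarrow> bool" where
  "is_weight w \<longleftrightarrow>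
     (\<forall>i j k. i \<le> j \<and> j \<le> k \<and> w i \<noteq> None \<and> w k \<noteq> None \<longrightarrow> w j \<noteq> None) \<and>
     (\<exists>F. finite F \<and> (\<forall>i j. i < j \<and> i \<notin> F \<and> j \<notin> F \<longrightarrow> \<not> (w i = Some Down \<and> w j = Some Up)))"

definition bounded_weight :: "weight \<Rightarrow> bool" where
  "bounded_weight w \<longleftrightarrow> finite (dom w)"

definition same_block :: "weight \<Rightarrow> weight \<Rightarrow> bool" where
  "same_block w v \<longleftrightarrow> (\<exists>\<pi>::int \<Rightarrow> int. bij \<pi> \<and> finite {i. \<pi> i \<noteq> i} \<and>
      (\<forall>i. \<pi> i \<noteq> i \<longrightarrow> w i \<in> {Some Down, Some Up}) \<and> v = w \<circ> \<pi>)"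

definition khovanov_block :: "nat \<Rightarrow> weight set \<Rightarrow> bool" where
  "khovanov_block n L \<longleftrightarrow>
     (\<exists>w0. is_weight w0 \<and> L = {v. is_weight v \<and> same_block w0 v}) \<and>
     (\<forall>v\<in>L. bounded_weight v \<and> card {i. v i = Some Up} = n \<and> card {i. v i = Some Down} = n)"

definition bruhat_step :: "weight \<Rightarrow> weight \<Rightarrow> bool" where
  "bruhat_step w v \<longleftrightarrow> (\<exists>i j. i < j \<and> w i = Some Down \<and> w j = Some Up \<and>
      v = w(i := Some Up, j := Some Down))"

definition bruhat_le :: "weight \<Rightarrow> weight \<Rightarrow> bool" where
  "bruhat_le = bruhat_step\<^sup>*\<^sup>*"

text \<open>A ray-free cup (or cap) diagram, given by its set of arcs (i,j), i<j.
  A cap diagram and its mirror cup diagram have the same set of arcs.\<close>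
definition arc_diagram :: "(int \<times> int) set \<Rightarrow> bool" where
  "arc_diagram A \<longleftrightarrow> finite A \<and> (\<forall>(i,j)\<in>A. i < j) \<and>
     (\<forall>(i,j)\<in>A. \<forall>(k,l)\<in>A. (i,j) \<noteq> (k,l) \<longrightarrow> {i,j} \<inter> {k,l} = {}) \<and>
     (\<forall>(i,j)\<in>A. \<forall>(k,l)\<in>A. \<not> (i < k \<and> k < j \<and> j < l))"

definition arc_oriented :: "(int \<times> int) set \<Rightarrow> weight \<Rightarrow> bool" where
  "arc_oriented A w \<longleftrightarrow> (\<forall>(i,j)\<in>A. {w i, w j} = {Some Down, Some Up}) \<and>
     (\<forall>p. w p \<in> {Some Down, Some Up} \<longrightarrow> (\<exists>(i,j)\<in>A. p = i \<or> p = j))"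

type_synonym basis = "(int \<times> int) set \<times> weight \<times> (int \<times> int) set"

text \<open>Basis vectors (a lam b): closed oriented circle diagrams with lam in the block.\<close>
definition basis_vec :: "weight set \<Rightarrow> basis \<Rightarrow> bool" where
  "basis_vec L x \<longleftrightarrow> (case x of (a, w, b) \<Rightarrow>
     arc_diagram a \<and> arc_diagram b \<and> w \<in> L \<and> arc_oriented a w \<and> arc_oriented b w)"

text \<open>Nodes of the stacked diagram: (False,p) on the bottom number line,
  (True,p) on the top number line.  Stacking a w b (bottom) under b* mu d (top);
  S is the set of arcs of b already cut by surgery (replaced by vertical segments).\<close>
type_synonym node = "bool \<times> int"

definition edges :: "(int\<times>int) set \<Rightarrow> (int\<times>int) set \<Rightarrow> (int\<times>int) set \<Rightarrow> (int\<times>int) set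
    \<Rightarrow> (node \<times> node) set" where
  "edges a b d S =
     {((False,i),(False,j)) | i j. (i,j) \<in> a} \<union>
     {((True,i),(True,j)) | i j. (i,j) \<in> d} \<union>
     {((False,i),(False,j)) | i j. (i,j) \<in> b - S} \<union>
     {((True,i),(True,j)) | i j. (i,j) \<in> b - S} \<union>
     {((False,i),(True,i)) | i j. (i,j) \<in> S} \<union>
     {((False,j),(True,j)) | i j. (i,j) \<in> S}"

definition conn :: "(node \<times> node) set \<Rightarrow> node \<Rightarrow> node \<Rightarrow> bool" where
  "conn E u v \<longleftrightarrow> (u, v) \<in> (E \<union> E\<inverse>)\<^sup>*"

text \<open>Circle labels: True = 1 (anticlockwise), False = x (clockwise);
  a labelling assigns to every node the label of its circle.\<close>
definition init_labels :: "(int\<times>int) set \<Rightarrow> (int\<times>int) set \<Rightarrow> (int\<times>int) set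
    \<Rightarrow> weight \<Rightarrow> weight \<Rightarrow> node \<Rightarrow> bool" where
  "init_labels a b d w m v =
     (let p = Min (snd ` {u. conn (edges a b d {}) v u})
      in if fst v then m p = Some Down else w p = Some Down)"

definition surg_step :: "(int\<times>int) set \<Rightarrow> (int\<times>int) set \<Rightarrow> (int\<times>int) set \<Rightarrow> (int\<times>int) set
    \<Rightarrow> (node \<Rightarrow> bool) \<Rightarrow> int \<times> int \<Rightarrow> (node \<Rightarrow> bool) list" where
  "surg_step a b d S L e =
     (let i = fst e; j = snd e; E = edges a b d S; E' = edges a b d (insert e S);
          u1 = (False, i); u2 = (True, i)
      in if \<not> conn E u1 u2 then
           (if \<not> L u1 \<and> \<not> L u2 then []
            else [\<lambda>v. if conn E' u1 v then (L u1 \<and> L u2) else L v])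
         else
           (let relab = (\<lambda>\<alpha> \<beta> v. if conn E' (False, i) v then \<alpha>
                                 else if conn E' (False, j) v then \<beta> else L v)
            in if L u1 then [relab True False, relab False True] else [relab False False]))"

fun surg :: "(int\<times>int) set \<Rightarrow> (int\<times>int) set \<Rightarrow> (int\<times>int) set \<Rightarrow> (int\<times>int) set
    \<Rightarrow> (node \<Rightarrow> bool) \<Rightarrow> (int \<times> int) list \<Rightarrow> (node \<Rightarrow> bool) list" where
  "surg a b d S L [] = [L]"
| "surg a b d S L (e # es) = concat (map (\<lambda>L'. surg a b d (insert e S) L' es) (surg_step a b d S L e))"

text \<open>Reading off the final orientation nu of a nu d after identifying the two number lines:
  a circle labelled 1 has its leftmost vertex labelled vee.\<close>
definition final_weight :: "(int\<times>int) set \<Rightarrow> (int\<times>int) set \<Rightarrow> (int\<times>int) set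
    \<Rightarrow> weight \<Rightarrow> (node \<Rightarrow> bool) \<Rightarrow> weight" where
  "final_weight a b d w L = (THE v.
     (\<forall>p. w p \<notin> {Some Down, Some Up} \<longrightarrow> v p = w p) \<and>
     (\<forall>p. w p \<in> {Some Down, Some Up} \<longrightarrow> v p \<in> {Some Down, Some Up}) \<and>
     arc_oriented a v \<and> arc_oriented d v \<and>
     (\<forall>p. w p \<in> {Some Down, Some Up} \<and>
          p = Min (snd ` {u. conn (edges a b d b) (False, p) u}) \<longrightarrow>
          (v p = Some Down \<longleftrightarrow> L (False, p))))"

text \<open>Surgery order: each cut cap/cup pair must be connectable without crossings,
  i.e. not enclosed by a pair that is still uncut.\<close>
definition encloses :: "int \<times> int \<Rightarrow> int \<times> int \<Rightarrow> bool" where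
  "encloses e f \<longleftrightarrow> fst e < fst f \<and> snd f < snd e"

definition admissible_order :: "(int\<times>int) set \<Rightarrow> (int\<times>int) list \<Rightarrow> bool" where
  "admissible_order b ord \<longleftrightarrow> distinct ord \<and> set ord = b \<and>
     (\<forall>k m. k < m \<and> m < length ord \<longrightarrow> \<not> encloses (ord ! m) (ord ! k))"

text \<open>Coefficient of the basis vector z in the product x y, computed by surgery in the order ord.\<close>
definition khov_mult :: "(int\<times>int) list \<Rightarrow> basis \<Rightarrow> basis \<Rightarrow> basis \<Rightarrow> 'k::comm_ring_1" where
  "khov_mult ord x y z = (case x of (a, w, b) \<Rightarrow> case y of (c, m, d) \<Rightarrow> case z of (a', v, d') \<Rightarrow>
     if b = c \<and> a' = a \<and> d' = d then
       of_nat (length (filter (\<lambda>L. final_weight a b d w L = v)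
                               (surg a b d {} (init_labels a b d w m) ord)))
     else 0)"

end

theory Submission
  imports Defs
begin

lemma conn_refl[simp]: "conn E x x" by (simp add: conn_def)
lemma conn_sym: "conn E x y \<Longrightarrow> conn E y x"
proof -
  assume "conn E x y"
  then have "(y,x) \<in> ((E \<union> E\<inverse>)\<inverse>)\<^sup>*" unfolding conn_def by (simp add: rtrancl_converse)
  then show ?thesis unfolding conn_def by (simp add: converse_Un sup_commute)
qed
lemma conn_trans: "conn E x y \<Longrightarrow> conn E y z \<Longrightarrow> conn E x z"
  unfolding conn_def by (rule rtrancl_trans)
lemma conn_edge: "(x,y) \<in> E \<Longrightarrow> conn E x y"
  unfolding conn_def by auto
lemma conn_edge': "(y,x) \<in> E \<Longrightarrow> conn E x y"
  unfolding conn_def by auto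
lemma conn_mono: "conn E x y \<Longrightarrow> E \<subseteq> E' \<Longrightarrow> conn E' x y"
proof -
  assume a: "conn E x y" "E \<subseteq> E'"
  have "E \<union> E\<inverse> \<subseteq> E' \<union> E'\<inverse>" using a(2) by auto
  then show ?thesis using a(1) rtrancl_mono unfolding conn_def by blast
qed

lemma conn_induct[consumes 1, case_names refl step]:
  assumes "conn E x y" "P x"
    "\<And>z z'. conn E x z \<Longrightarrow> P z \<Longrightarrow> (z,z') \<in> E \<or> (z',z) \<in> E \<Longrightarrow> P z'"
  shows "P y"
proof -
  have "(x,y) \<in> (E \<union> E\<inverse>)\<^sup>*" using assms(1) unfolding conn_def .
  then show ?thesis
  proof (induction rule: rtrancl_induct)
    case base then show ?case using assms(2) .
  next
    case (step y z)
    have c: "conn E x y" using step(1) unfolding conn_def .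
    have "(y,z) \<in> E \<or> (z,y) \<in> E" using step(2) by blast
    then show ?case using assms(3)[OF c step(3)] by blast
  qed
qed



lemma conn_restrict:
  assumes "conn (G0 \<union> F) x y"
    and "\<And>p q. (p,q) \<in> F \<Longrightarrow> conn (G0 \<union> F) x p \<Longrightarrow> False"
  shows "conn G0 x y"
  using assms(1)
proof (induction rule: conn_induct)
  case refl then show ?case by simp
next
  case (step z z')
  have zz: "conn (G0 \<union> F) x z" using step.hyps(1) .
  show ?case
  proof (cases "(z,z') \<in> G0 \<or> (z',z) \<in> G0")
    case True
    then have "conn G0 z z'" using conn_edge conn_edge' by blast
    then show ?thesis using step.IH conn_trans by blast
  next
    case False
    then have "(z,z') \<in> F \<or> (z',z) \<in> F" using step.hyps(2) by blast
    then show ?thesis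
    proof
      assume "(z,z') \<in> F" then show ?thesis using assms(2) zz by blast
    next
      assume h: "(z',z) \<in> F"
      have "conn (G0 \<union> F) z z'" using h by (intro conn_edge') blast
      then have "conn (G0 \<union> F) x z'" using zz conn_trans by blast
      then show ?thesis using assms(2) h by blast
    qed
  qed
qed

definition cons :: "(node \<times> node) set \<Rightarrow> (node \<Rightarrow> bool) \<Rightarrow> bool" where
  "cons E L \<longleftrightarrow> (\<forall>x y. conn E x y \<longrightarrow> L x = L y)"

locale surgery =
  fixes E0 :: "(node \<times> node) set" and u1 u2 w1 w2 :: node
begin
definition "EE = E0 \<union> {(u1,w1),(u2,w2)}"
definition "EE' = E0 \<union> {(u1,u2),(w1,w2)}"

lemma EE_w: "conn EE u1 w1" "conn EE u2 w2" "conn EE w1 u1" "conn EE w2 u2"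
  by (rule conn_edge conn_edge', simp add: EE_def)+
lemma EE'_v: "conn EE' u1 u2" "conn EE' w1 w2" "conn EE' u2 u1" "conn EE' w2 w1"
  by (rule conn_edge conn_edge', simp add: EE'_def)+

definition "UU x \<longleftrightarrow> conn EE x u1 \<or> conn EE x u2"
lemma UU_conn: "conn EE x y \<Longrightarrow> UU y \<Longrightarrow> UU x"
  unfolding UU_def using conn_trans by blast
lemma UU_nodes: "UU u1" "UU u2" "UU w1" "UU w2"
  unfolding UU_def using EE_w by auto

lemma merge_conn:
  assumes nb1: "conn E0 u1 w1" and nb2: "conn E0 u2 w2"
  shows "conn EE' x y \<longleftrightarrow> conn EE x y \<or> (UU x \<and> UU y)" (is "?l \<longleftrightarrow> ?r")
proof
  assume ?l
  then show ?r
  proof (induction rule: conn_induct)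
    case refl then show ?case by simp
  next
    case (step z z')
    show ?case
    proof (cases "(z,z') \<in> E0 \<or> (z',z) \<in> E0")
      case True
      then have c: "conn EE z z'" unfolding EE_def by (meson UnI1 conn_edge conn_edge')
      then have c': "conn EE z' z" using conn_sym by blast
      from step.IH show ?thesis
      proof
        assume "conn EE x z" then show ?thesis using conn_trans[OF _ c] by blast
      next
        assume "UU x \<and> UU z" then show ?thesis using c' UU_conn by blast
      qed
    next
      case False
      then have "z \<in> {u1,u2,w1,w2}" "z' \<in> {u1,u2,w1,w2}" using step.hyps(2) unfolding EE'_def by auto
      then have u: "UU z" "UU z'" using UU_nodes by auto
      from step.IH show ?thesis
      proof
        assume "conn EE x z" then show ?thesis using u UU_conn by blast
      next
        assume "UU x \<and> UU z" then show ?thesis using u by blast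
      qed
    qed
  qed
next
  have m: "conn EE' u1 w1" "conn EE' u2 w2"
    using nb1 nb2 conn_mono unfolding EE'_def by blast+
  have e1: "conn EE' x y" if "conn EE x y" for x y
    using that
  proof (induction rule: conn_induct)
    case refl then show ?case by simp
  next
    case (step z z')
    have "conn EE' z z'"
    proof (cases "(z,z') \<in> E0 \<or> (z',z) \<in> E0")
      case True
      then show ?thesis unfolding EE'_def by (meson UnI1 conn_edge conn_edge')
    next
      case False
      then have "(z,z') \<in> {(u1,w1),(u2,w2)} \<or> (z',z) \<in> {(u1,w1),(u2,w2)}"
        using step.hyps(2) unfolding EE_def by blast
      then show ?thesis using m conn_sym[OF m(1)] conn_sym[OF m(2)] by auto
    qed
    then show ?case using conn_trans[OF step.IH] by blast
  qed
  assume ?r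
  then show ?l
  proof
    assume "conn EE x y" then show ?thesis using e1 by blast
  next
    assume "UU x \<and> UU y"
    then have "conn EE' x u1" "conn EE' y u1" unfolding UU_def
      using e1 conn_trans[OF _ EE'_v(3)] by blast+
    then show ?thesis using conn_sym conn_trans by metis
  qed
qed

lemma split_conn1:
  assumes "conn EE u1 u2"
  shows "conn EE' x y \<Longrightarrow> conn EE x y"
proof (induction rule: conn_induct)
  case refl then show ?case by simp
next
  case (step z z')
  have c1: "conn EE u1 u2" using assms .
  have c2: "conn EE w1 w2" using conn_trans[OF conn_trans[OF EE_w(3) c1] EE_w(2)] .
  have "conn EE z z'"
  proof (cases "(z,z') \<in> E0 \<or> (z',z) \<in> E0")
    case True
    then show ?thesis unfolding EE_def by (meson UnI1 conn_edge conn_edge')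
  next
    case False
    then have "(z,z') \<in> {(u1,u2),(w1,w2)} \<or> (z',z) \<in> {(u1,u2),(w1,w2)}"
      using step.hyps(2) unfolding EE'_def by blast
    then show ?thesis using c1 c2 conn_sym[OF c1] conn_sym[OF c2] by auto
  qed
  then show ?case using conn_trans[OF step.IH] by blast
qed

lemma split_conn2:
  assumes "conn EE x u1"
  shows "conn EE' x u1 \<or> conn EE' x w1"
proof -
  have "conn EE u1 x" using assms conn_sym by metis
  then have "conn EE' x u1 \<or> conn EE' x w1 \<or> conn EE' x u2 \<or> conn EE' x w2"
  proof (induction rule: conn_induct)
    case refl then show ?case by simp
  next
    case (step z z')
    show ?case
    proof (cases "(z,z') \<in> E0 \<or> (z',z) \<in> E0")
      case True
      then have c: "conn EE' z' z" unfolding EE'_def by (meson UnI1 conn_edge conn_edge')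
      show ?thesis using step.IH conn_trans[OF c] by blast
    next
      case False
      then have "z' \<in> {u1,u2,w1,w2}" using step.hyps(2) unfolding EE_def by auto
      then show ?thesis by auto
    qed
  qed
  then show ?thesis using conn_trans[OF _ EE'_v(3)] conn_trans[OF _ EE'_v(4)] by blast
qed

lemma split_conn3:
  assumes "conn EE u1 u2" "\<not> conn EE x u1"
  shows "conn EE' x y \<longleftrightarrow> conn EE x y"
proof
  assume "conn EE' x y" then show "conn EE x y" using split_conn1 assms(1) by blast
next
  assume h: "conn EE x y"
  have a: "conn EE u2 u1" "conn EE w1 u1" "conn EE w2 u1"
    using conn_sym[OF assms(1)] EE_w(3) conn_trans[OF EE_w(4) conn_sym[OF assms(1)]] by auto
  have "conn E0 x y"
  proof (rule conn_restrict[of E0 "{(u1,w1),(u2,w2)}"])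
    show "conn (E0 \<union> {(u1, w1), (u2, w2)}) x y" using h by (simp add: EE_def)
    fix p q assume "(p,q) \<in> {(u1, w1), (u2, w2)}" "conn (E0 \<union> {(u1, w1), (u2, w2)}) x p"
    then have "p \<in> {u1,u2}" "conn EE x p" unfolding EE_def[symmetric] by auto
    then show False using a assms(2) conn_trans[of EE x p u1] by auto
  qed
  then show "conn EE' x y" using conn_mono unfolding EE'_def by blast
qed
end

definition encl :: "int \<times> int \<Rightarrow> int \<times> int \<Rightarrow> bool" where
  "encl e' e \<longleftrightarrow> fst e' < fst e \<and> snd e < snd e'"
definition over :: "int \<Rightarrow> int \<times> int \<Rightarrow> bool" where
  "over v e \<longleftrightarrow> fst e < v \<and> v \<le> snd e"
definition fc :: "bool \<Rightarrow> nat \<Rightarrow> nat" where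
  "fc l k = (if l then (k+1) div 2 else k div 2)"

lemma fc_Suc: "fc l (Suc k) = fc l k + (if l \<noteq> odd k then 1 else 0)"
proof -
  obtain m where "k = 2*m \<or> k = 2*m+1" by (metis oddE evenE)
  then show ?thesis by (cases l) (auto simp: fc_def)
qed

lemma card_alt: "card {t. t < k \<and> l \<noteq> odd t} = fc l k"
proof (induction k)
  case 0 then show ?case by (simp add: fc_def)
next
  case (Suc k)
  show ?case
  proof (cases "l \<noteq> odd k")
    case True
    then have "{t. t < Suc k \<and> l \<noteq> odd t} = insert k {t. t < k \<and> l \<noteq> odd t}"
      by (auto simp: less_Suc_eq)
    then have "card {t. t < Suc k \<and> l \<noteq> odd t} = Suc (fc l k)"
      using Suc.IH by (simp only: card_insert_disjoint finite_Collect_conjI) auto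
    also have "\<dots> = fc l (Suc k)" using fc_Suc[of l k] True by presburger
    finally show ?thesis .
  next
    case False
    then have "{t. t < Suc k \<and> l \<noteq> odd t} = {t. t < k \<and> l \<noteq> odd t}"
      by (auto simp: less_Suc_eq)
    then have "card {t. t < Suc k \<and> l \<noteq> odd t} = fc l k"
      using Suc.IH by (simp only:)
    also have "\<dots> = fc l (Suc k)" using fc_Suc[of l k] False by presburger
    finally show ?thesis .
  qed
qed

lemma arc_facts:
  assumes "arc_diagram X" "e \<in> X" "e' \<in> X" "e \<noteq> e'"
  shows "fst e < snd e" "fst e \<noteq> fst e'" "fst e \<noteq> snd e'" "snd e \<noteq> snd e'" "snd e \<noteq> fst e'"
    "\<not> (fst e < fst e' \<and> fst e' < snd e \<and> snd e < snd e')"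
proof -
  obtain i j where e: "e = (i,j)" by force
  obtain k l where e': "e' = (k,l)" by force
  have d: "{i,j} \<inter> {k,l} = {}" using assms unfolding arc_diagram_def e e' by blast
  show "fst e < snd e" using assms unfolding arc_diagram_def e by auto
  show "fst e \<noteq> fst e'" "fst e \<noteq> snd e'" "snd e \<noteq> snd e'" "snd e \<noteq> fst e'" using d e e' by auto
  show "\<not> (fst e < fst e' \<and> fst e' < snd e \<and> snd e < snd e')"
    using assms unfolding arc_diagram_def e e' by fastforce
qed

lemma over_comparable:
  assumes "arc_diagram X" "e \<in> X" "e' \<in> X" "e \<noteq> e'" "over v e" "over v e'"
  shows "encl e e' \<or> encl e' e"
proof -
  note f = arc_facts[OF assms(1-4)]
  note g = arc_facts[OF assms(1) assms(3) assms(2) assms(4)[symmetric]]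
  have o: "fst e < v" "v \<le> snd e" "fst e' < v" "v \<le> snd e'" using assms(5,6) unfolding over_def by auto
  show ?thesis
  proof (cases "fst e < fst e'")
    case True
    then have "fst e' < snd e" using o by linarith
    then have "\<not> snd e < snd e'" using f(6) True by blast
    then have "snd e' < snd e" using f(4) by linarith
    then show ?thesis using True unfolding encl_def by blast
  next
    case False
    then have F: "fst e' < fst e" using f(2) by linarith
    then have "fst e < snd e'" using o by linarith
    then have "\<not> snd e' < snd e" using g(6) F by blast
    then have "snd e < snd e'" using f(4) by linarith
    then show ?thesis using F unfolding encl_def by blast
  qed
qed

lemma chain_count:
  assumes X: "arc_diagram X" and KX: "K \<subseteq> X" and ov: "\<forall>e\<in>K. over v e"
  shows "card {e\<in>K. l \<noteq> odd (card {e'\<in>K. encl e' e})} = fc l (card K)"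
proof -
  have "finite X" using X unfolding arc_diagram_def by simp
  then have fin: "finite K" using finite_subset[OF KX] by blast
  define h where "h e = card {e'\<in>K. encl e' e}" for e
  have hlt: "h e < card K" if "e \<in> K" for e
  proof -
    have "{e'\<in>K. encl e' e} \<subseteq> K - {e}" by (auto simp: encl_def)
    then have "h e \<le> card (K - {e})" unfolding h_def using fin by (intro card_mono) auto
    also have "\<dots> < card K" using card_Diff1_less[OF fin that] .
    finally show ?thesis .
  qed
  have hmono: "h e < h e''" if "e \<in> K" "e'' \<in> K" "encl e e''" for e e''
  proof -
    have "insert e {e'\<in>K. encl e' e} \<subseteq> {e'\<in>K. encl e' e''}"
      using that by (auto simp: encl_def)
    moreover have "e \<notin> {e'\<in>K. encl e' e}" by (auto simp: encl_def)
    ultimately have "card (insert e {e'\<in>K. encl e' e}) \<le> card {e'\<in>K. encl e' e''}"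
      using fin by (intro card_mono) auto
    moreover have "finite {e'\<in>K. encl e' e}" using fin by simp
    ultimately show ?thesis unfolding h_def using \<open>e \<notin> _\<close> by simp
  qed
  have inj: "inj_on h K"
  proof (rule inj_onI, rule ccontr)
    fix e e'' assume a: "e \<in> K" "e'' \<in> K" "h e = h e''" "e \<noteq> e''"
    then have "encl e e'' \<or> encl e'' e" using over_comparable[OF X] KX ov by blast
    then show False using hmono a by fastforce
  qed
  have img: "h ` K = {..<card K}"
  proof -
    have "h ` K \<subseteq> {..<card K}" using hlt by auto
    moreover have "card (h ` K) = card {..<card K}" using card_image[OF inj] by simp
    ultimately show ?thesis using card_subset_eq by (metis finite_lessThan)
  qed
  have "card {e\<in>K. l \<noteq> odd (h e)} = card (h ` {e\<in>K. l \<noteq> odd (h e)})"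
    using inj by (intro card_image[symmetric]) (auto intro: inj_on_subset)
  also have "h ` {e\<in>K. l \<noteq> odd (h e)} = {t. t < card K \<and> l \<noteq> odd t}"
    using img by auto
  finally show ?thesis using card_alt unfolding h_def by simp
qed

lemma arc_finite: "arc_diagram X \<Longrightarrow> finite X"
  unfolding arc_diagram_def by simp

definition Dv :: "bool \<Rightarrow> (node \<times> node) set \<Rightarrow> (node \<Rightarrow> bool) \<Rightarrow> (int \<times> int) set \<Rightarrow> int \<times> int \<Rightarrow> bool" where
  "Dv s E L X e \<longleftrightarrow> (L (s, fst e) \<noteq> odd (card {e'\<in>X. encl e' e \<and> conn E (s, fst e) (s, fst e')}))"

definition Phi :: "bool \<Rightarrow> (node \<times> node) set \<Rightarrow> (node \<Rightarrow> bool) \<Rightarrow> (int \<times> int) set \<Rightarrow> int \<Rightarrow> nat" where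
  "Phi s E L X v = card {e\<in>X. over v e \<and> Dv s E L X e}"

lemma card_split:
  assumes "finite A" "B \<subseteq> A"
  shows "card {e\<in>A. P e} = card {e\<in>B. P e} + card {e\<in>A - B. P e}"
proof -
  have "{e\<in>A. P e} = {e\<in>B. P e} \<union> {e\<in>A - B. P e}" using assms(2) by auto
  moreover have "finite B" using assms finite_subset by blast
  then have "finite {e\<in>B. P e}" "finite {e\<in>A - B. P e}" using assms by auto
  moreover have "{e\<in>B. P e} \<inter> {e\<in>A - B. P e} = {}" by auto
  ultimately show ?thesis using card_Un_disjoint by metis
qed

lemma class_count:
  assumes X: "arc_diagram X" and cs: "cons E L"
    and K: "K = {e\<in>X. over v e \<and> conn E (s, fst e) u}"
  shows "card {e\<in>K. Dv s E L X e} = fc (L u) (card K)"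
proof -
  have eq: "Dv s E L X e = (L u \<noteq> odd (card {e'\<in>K. encl e' e}))" if e: "e \<in> K" for e
  proof -
    have c: "conn E (s, fst e) u" using e K by simp
    then have l: "L (s, fst e) = L u" using cs unfolding cons_def by blast
    have "{e'\<in>X. encl e' e \<and> conn E (s, fst e) (s, fst e')} = {e'\<in>K. encl e' e}"
    proof (rule set_eqI, rule iffI)
      fix e' assume a: "e' \<in> {e'\<in>X. encl e' e \<and> conn E (s, fst e) (s, fst e')}"
      then have "over v e'" using e K unfolding encl_def over_def by auto
      moreover have "conn E (s, fst e') u" using a conn_trans[OF conn_sym c] by blast
      ultimately show "e' \<in> {e'\<in>K. encl e' e}" using a K by blast
    next
      fix e' assume a: "e' \<in> {e'\<in>K. encl e' e}"
      then have "conn E (s, fst e') u" using K by blast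
      then have "conn E (s, fst e) (s, fst e')" using conn_trans[OF c conn_sym] by blast
      then show "e' \<in> {e'\<in>X. encl e' e \<and> conn E (s, fst e) (s, fst e')}" using a K by blast
    qed
    then show ?thesis unfolding Dv_def l by simp
  qed
  have "{e\<in>K. Dv s E L X e} = {e\<in>K. L u \<noteq> odd (card {e'\<in>K. encl e' e})}"
    using eq by blast
  moreover have "card {e\<in>K. L u \<noteq> odd (card {e'\<in>K. encl e' e})} = fc (L u) (card K)"
    by (rule chain_count[OF X]) (auto simp: K)
  ultimately show ?thesis by simp
qed

lemma d2: "2 * ((x::nat) div 2) \<le> x" "x \<le> 2 * (x div 2) + 1" by linarith+

lemma fc_b: "2 * fc l k \<le> k + 1" "k \<le> 2 * fc l k + 1" "l \<Longrightarrow> k \<le> 2 * fc l k" "\<not> l \<Longrightarrow> 2 * fc l k \<le> k"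
  unfolding fc_def using d2[of k] d2[of "k+1"] by (cases l; simp)+

lemma fc_merge: "a \<or> b \<Longrightarrow> fc (a \<and> b) (k1 + k2) \<le> fc a k1 + fc b k2"
proof (cases a; cases b)
  assume "a" "b" then show ?thesis using fc_b[where l=a and k=k1] fc_b[where l=b and k=k2] fc_b[where l="a\<and>b" and k="k1+k2"] by (simp; linarith?)
next
  assume "a" "\<not>b" then show ?thesis using fc_b[where l=a and k=k1] fc_b[where l=b and k=k2] fc_b[where l="a\<and>b" and k="k1+k2"] by (simp; linarith?)
next
  assume "\<not>a" "b" then show ?thesis using fc_b[where l=a and k=k1] fc_b[where l=b and k=k2] fc_b[where l="a\<and>b" and k="k1+k2"] by (simp; linarith?)
qed simp

lemma fc_split1: "fc False k \<le> fc l k"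
proof (cases l)
  case True then show ?thesis unfolding fc_def by (simp add: div_le_mono)
qed (simp add: fc_def)

lemma fc_split2: "(if l then a \<noteq> b else \<not> a \<and> \<not> b) \<Longrightarrow> fc a k1 + fc b k2 \<le> fc l (k1 + k2)"
proof (cases l)
  case True
  assume h: "(if l then a \<noteq> b else \<not> a \<and> \<not> b)"
  then have "(a \<and> \<not> b) \<or> (\<not>a \<and> b)" using True by auto
  then show ?thesis using True fc_b[where l=a and k=k1] fc_b[where l=b and k=k2] fc_b[where l=l and k="k1+k2"] by auto
next
  case False
  assume h: "(if l then a \<noteq> b else \<not> a \<and> \<not> b)"
  then have "\<not>a" "\<not>b" using False by auto
  then show ?thesis using False fc_b[where l=a and k=k1] fc_b[where l=b and k=k2] fc_b[where l=l and k="k1+k2"] by auto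
qed

context surgery begin

lemma UU_EE': "UU x \<Longrightarrow> conn E0 u1 w1 \<Longrightarrow> conn E0 u2 w2 \<Longrightarrow> conn EE' x u1"
  using merge_conn[of x u1] UU_nodes(1) by blast

lemma merge_step:
  assumes X: "arc_diagram X" and nb1: "conn E0 u1 w1" and nb2: "conn E0 u2 w2"
    and nc: "\<not> conn EE u1 u2" and cs: "cons EE L"
    and L': "L' = (\<lambda>x. if conn EE' u1 x then L u1 \<and> L u2 else L x)"
    and lab: "L u1 \<or> L u2"
  shows "cons EE' L' \<and> Phi s EE' L' X v \<le> Phi s EE L X v"
proof -
  have mc: "conn EE' x y \<longleftrightarrow> conn EE x y \<or> (UU x \<and> UU y)" for x y
    using merge_conn[OF nb1 nb2] .
  have U1: "conn EE' x u1 \<longleftrightarrow> UU x" for x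
    using mc[of x u1] UU_nodes(1) UU_conn by blast
  have cs': "cons EE' L'"
    unfolding cons_def
  proof (intro allI impI)
    fix x y assume c: "conn EE' x y"
    show "L' x = L' y"
    proof (cases "conn EE' u1 x")
      case True
      then have "conn EE' u1 y" using conn_trans[OF _ c] by blast
      then show ?thesis using True L' by simp
    next
      case False
      then have ny: "\<not> conn EE' u1 y" using conn_trans[OF _ conn_sym[OF c]] by blast
      have "\<not> UU x" using False U1 conn_sym by blast
      then have "conn EE x y" using mc c by blast
      then have "L x = L y" using cs unfolding cons_def by blast
      then show ?thesis using False ny L' by simp
    qed
  qed
  have fin: "finite X" using arc_finite[OF X] .
  define Y where "Y = {e\<in>X. over v e}"
  define K1 where "K1 = {e\<in>X. over v e \<and> conn EE (s, fst e) u1}"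
  define K2 where "K2 = {e\<in>X. over v e \<and> conn EE (s, fst e) u2}"
  define K where "K = {e\<in>X. over v e \<and> conn EE' (s, fst e) u1}"
  have finY: "finite Y" using fin unfolding Y_def by simp
  have KK: "K = K1 \<union> K2" unfolding K_def K1_def K2_def using U1 unfolding UU_def by blast
  have dis: "K1 \<inter> K2 = {}"
  proof (rule ccontr)
    assume "K1 \<inter> K2 \<noteq> {}"
    then obtain e where "e \<in> K1" "e \<in> K2" by blast
    then have "conn EE (s, fst e) u1" "conn EE (s, fst e) u2" unfolding K1_def K2_def by auto
    then have "conn EE u1 u2" using conn_trans[OF conn_sym] by blast
    then show False using nc by blast
  qed
  have KY: "K \<subseteq> Y" "K1 \<subseteq> Y" unfolding K_def K1_def Y_def by auto
  have K2Y: "K2 \<subseteq> Y" using KK KY(1) by blast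
  have finK: "finite K1" "finite K2" using finite_subset[OF KY(2) finY] finite_subset[OF K2Y finY] by auto
  have finKK: "finite K" using finite_subset[OF KY(1) finY] .
  have K1K: "K1 \<subseteq> K" using KK by blast
  have same: "Dv s EE' L' X e = Dv s EE L X e" if "e \<in> Y - K" for e
  proof -
    have nu: "\<not> UU (s, fst e)" using that U1 unfolding K_def Y_def by blast
    then have "\<not> conn EE' u1 (s, fst e)" using U1 conn_sym by blast
    then have "L' (s, fst e) = L (s, fst e)" using L' by simp
    moreover have "conn EE' (s, fst e) y \<longleftrightarrow> conn EE (s, fst e) y" for y using mc nu by blast
    ultimately show ?thesis unfolding Dv_def by simp
  qed
  have "Phi s EE' L' X v = card {e\<in>Y. Dv s EE' L' X e}" unfolding Phi_def Y_def by (rule arg_cong[where f=card]) auto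
  also have "\<dots> = card {e\<in>K. Dv s EE' L' X e} + card {e\<in>Y - K. Dv s EE' L' X e}"
    using card_split[OF finY KY(1)] .
  also have "card {e\<in>K. Dv s EE' L' X e} = fc (L' u1) (card K)"
    using class_count[OF X cs' K_def] .
  also have "card {e\<in>Y - K. Dv s EE' L' X e} = card {e\<in>Y - K. Dv s EE L X e}"
    using same by (intro arg_cong[where f=card]) auto
  also have "L' u1 = (L u1 \<and> L u2)" using L' by simp
  also have "card K = card K1 + card K2" unfolding KK using card_Un_disjoint[OF finK dis] .
  finally have new: "Phi s EE' L' X v = fc (L u1 \<and> L u2) (card K1 + card K2) + card {e\<in>Y - K. Dv s EE L X e}" .
  have "Phi s EE L X v = card {e\<in>Y. Dv s EE L X e}" unfolding Phi_def Y_def by (rule arg_cong[where f=card]) auto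
  also have "\<dots> = card {e\<in>K. Dv s EE L X e} + card {e\<in>Y - K. Dv s EE L X e}"
    using card_split[OF finY KY(1)] .
  also have "card {e\<in>K. Dv s EE L X e} = card {e\<in>K1. Dv s EE L X e} + card {e\<in>K - K1. Dv s EE L X e}"
    using card_split[OF finKK K1K] .
  also have "K - K1 = K2" using KK dis by blast
  also have "card {e\<in>K1. Dv s EE L X e} = fc (L u1) (card K1)"
    using class_count[OF X cs K1_def] .
  also have "card {e\<in>K2. Dv s EE L X e} = fc (L u2) (card K2)"
    using class_count[OF X cs K2_def] .
  finally have old: "Phi s EE L X v = fc (L u1) (card K1) + fc (L u2) (card K2) + card {e\<in>Y - K. Dv s EE L X e}" .
  show ?thesis using cs' new old fc_merge[OF lab, of "card K1" "card K2"] by linarith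
qed

lemma split_step:
  assumes X: "arc_diagram X" and c: "conn EE u1 u2" and cs: "cons EE L"
    and L': "L' = (\<lambda>x. if conn EE' u1 x then al else if conn EE' w1 x then be else L x)"
    and lab: "if L u1 then al \<noteq> be else \<not> al \<and> \<not> be"
  shows "cons EE' L' \<and> Phi s EE' L' X v \<le> Phi s EE L X v"
proof -
  have sc1: "conn EE x y" if "conn EE' x y" for x y using split_conn1[OF c that] .
  have cw1: "conn EE w1 u1" using EE_w(3) .
  have cs': "cons EE' L'"
    unfolding cons_def
  proof (intro allI impI)
    fix x y assume cxy: "conn EE' x y"
    show "L' x = L' y"
    proof (cases "conn EE' u1 x")
      case True
      then have "conn EE' u1 y" using conn_trans[OF _ cxy] by blast
      then show ?thesis using True L' by simp
    next
      case F1: False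
      then have ny: "\<not> conn EE' u1 y" using conn_trans[OF _ conn_sym[OF cxy]] by blast
      show ?thesis
      proof (cases "conn EE' w1 x")
        case True
        then have "conn EE' w1 y" using conn_trans[OF _ cxy] by blast
        then show ?thesis using True F1 ny L' by simp
      next
        case False
        then have ny2: "\<not> conn EE' w1 y" using conn_trans[OF _ conn_sym[OF cxy]] by blast
        have "L x = L y" using cs sc1[OF cxy] unfolding cons_def by blast
        then show ?thesis using F1 False ny ny2 L' by simp
      qed
    qed
  qed
  have fin: "finite X" using arc_finite[OF X] .
  define Y where "Y = {e\<in>X. over v e}"
  define K where "K = {e\<in>X. over v e \<and> conn EE (s, fst e) u1}"
  define K1 where "K1 = {e\<in>X. over v e \<and> conn EE' (s, fst e) u1}"
  define K2 where "K2 = {e\<in>X. over v e \<and> conn EE' (s, fst e) w1}"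
  have finY: "finite Y" using fin unfolding Y_def by simp
  have KY: "K \<subseteq> Y" unfolding K_def Y_def by auto
  have finKK: "finite K" using finite_subset[OF KY finY] .
  have KK: "K = K1 \<union> K2"
  proof (rule set_eqI, rule iffI)
    fix e assume "e \<in> K"
    then show "e \<in> K1 \<union> K2" using split_conn2[of "(s, fst e)"] unfolding K_def K1_def K2_def by auto
  next
    fix e assume "e \<in> K1 \<union> K2"
    then have e: "e \<in> X" "over v e" and "conn EE' (s, fst e) u1 \<or> conn EE' (s, fst e) w1"
      unfolding K1_def K2_def by auto
    then have "conn EE (s, fst e) u1 \<or> conn EE (s, fst e) w1" using sc1 by blast
    then have "conn EE (s, fst e) u1" using conn_trans[OF _ cw1] by blast
    then show "e \<in> K" unfolding K_def using e by blast
  qed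
  have K1K: "K1 \<subseteq> K" "K2 \<subseteq> K" using KK by blast+
  have finK: "finite K1" "finite K2" using finite_subset[OF K1K(1) finKK] finite_subset[OF K1K(2) finKK] by auto
  have same: "Dv s EE' L' X e = Dv s EE L X e" if "e \<in> Y - K" for e
  proof -
    have nu: "\<not> conn EE (s, fst e) u1" using that unfolding K_def Y_def by blast
    have "\<not> conn EE' u1 (s, fst e)" using nu sc1 conn_sym by blast
    moreover have "\<not> conn EE' w1 (s, fst e)"
    proof
      assume "conn EE' w1 (s, fst e)"
      then have "conn EE w1 (s, fst e)" using sc1 by blast
      then have "conn EE (s, fst e) u1" using conn_trans[OF conn_sym cw1] by blast
      then show False using nu by blast
    qed
    ultimately have "L' (s, fst e) = L (s, fst e)" using L' by simp
    moreover have "conn EE' (s, fst e) y \<longleftrightarrow> conn EE (s, fst e) y" for y using split_conn3[OF c nu] .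
    ultimately show ?thesis unfolding Dv_def by simp
  qed
  have "Phi s EE L X v = card {e\<in>Y. Dv s EE L X e}" unfolding Phi_def Y_def by (rule arg_cong[where f=card]) auto
  also have "\<dots> = card {e\<in>K. Dv s EE L X e} + card {e\<in>Y - K. Dv s EE L X e}"
    using card_split[OF finY KY] .
  also have "card {e\<in>K. Dv s EE L X e} = fc (L u1) (card K)"
    using class_count[OF X cs K_def] .
  finally have old: "Phi s EE L X v = fc (L u1) (card K) + card {e\<in>Y - K. Dv s EE L X e}" .
  have "Phi s EE' L' X v = card {e\<in>Y. Dv s EE' L' X e}" unfolding Phi_def Y_def by (rule arg_cong[where f=card]) auto
  also have "\<dots> = card {e\<in>K. Dv s EE' L' X e} + card {e\<in>Y - K. Dv s EE' L' X e}"
    using card_split[OF finY KY] .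
  also have "card {e\<in>Y - K. Dv s EE' L' X e} = card {e\<in>Y - K. Dv s EE L X e}"
    using same by (intro arg_cong[where f=card]) auto
  finally have new: "Phi s EE' L' X v = card {e\<in>K. Dv s EE' L' X e} + card {e\<in>Y - K. Dv s EE L X e}" .
  have l1: "L' u1 = al" using L' by simp
  have "card {e\<in>K. Dv s EE' L' X e} \<le> fc (L u1) (card K)"
  proof (cases "conn EE' u1 w1")
    case True
    have "K2 \<subseteq> K1"
    proof
      fix e assume "e \<in> K2"
      then have e: "e \<in> X" "over v e" "conn EE' (s, fst e) w1" unfolding K2_def by auto
      then have "conn EE' (s, fst e) u1" using conn_trans[OF _ conn_sym[OF True]] by blast
      then show "e \<in> K1" using e unfolding K1_def by blast
    qed
    then have "K1 = K" using KK by blast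
    then have "card {e\<in>K. Dv s EE' L' X e} = fc al (card K)"
      using class_count[OF X cs' K1_def] l1 by simp
    also have "\<dots> \<le> fc (L u1) (card K)"
      using lab fc_split1 by (cases "L u1") auto
    finally show ?thesis .
  next
    case False
    have l2: "L' w1 = be" using L' False conn_sym by auto
    have dis: "K1 \<inter> K2 = {}"
    proof (rule ccontr)
      assume "K1 \<inter> K2 \<noteq> {}"
      then obtain e where "e \<in> K1" "e \<in> K2" by blast
      then have "conn EE' (s, fst e) u1" "conn EE' (s, fst e) w1" unfolding K1_def K2_def by auto
      then have "conn EE' u1 w1" using conn_trans[OF conn_sym] by blast
      then show False using False by blast
    qed
    have K2eq: "K - K1 = K2" using KK dis by blast
    have "card {e\<in>K. Dv s EE' L' X e} = card {e\<in>K1. Dv s EE' L' X e} + card {e\<in>K - K1. Dv s EE' L' X e}"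
      using card_split[OF finKK K1K(1)] .
    also have "\<dots> = fc al (card K1) + fc be (card K2)"
      using class_count[OF X cs' K1_def] class_count[OF X cs' K2_def] l1 l2 K2eq by simp
    also have "\<dots> \<le> fc (L u1) (card K1 + card K2)" using fc_split2[OF lab] .
    also have "card K1 + card K2 = card K" unfolding KK using card_Un_disjoint[OF finK dis] by simp
    finally show ?thesis .
  qed
  then show ?thesis using cs' new old by linarith
qed

end

locale invol2 =
  fixes N :: "'a set" and al be :: "'a \<Rightarrow> 'a"
  assumes fin: "finite N"
    and alN: "\<And>z. z \<in> N \<Longrightarrow> al z \<in> N" and beN: "\<And>z. z \<in> N \<Longrightarrow> be z \<in> N"
    and alal: "\<And>z. z \<in> N \<Longrightarrow> al (al z) = z" and bebe: "\<And>z. z \<in> N \<Longrightarrow> be (be z) = z"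
    and alf: "\<And>z. z \<in> N \<Longrightarrow> al z \<noteq> z" and bef: "\<And>z. z \<in> N \<Longrightarrow> be z \<noteq> z"
begin

definition "pi = be \<circ> al"

lemma piN: "z \<in> N \<Longrightarrow> pi z \<in> N" unfolding pi_def using alN beN by simp
lemma piN_pow: "z \<in> N \<Longrightarrow> (pi ^^ t) z \<in> N"
  by (induction t) (auto simp: piN)

lemma pi_inj: "z \<in> N \<Longrightarrow> y \<in> N \<Longrightarrow> pi z = pi y \<Longrightarrow> z = y"
  unfolding pi_def by (metis alal bebe alN comp_apply)

lemma pow_inj: "z \<in> N \<Longrightarrow> y \<in> N \<Longrightarrow> (pi ^^ t) z = (pi ^^ t) y \<Longrightarrow> z = y"
proof (induction t)
  case 0 then show ?case by simp
next
  case (Suc t)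
  have "pi ((pi ^^ t) z) = pi ((pi ^^ t) y)" using Suc.prems by simp
  then have "(pi ^^ t) z = (pi ^^ t) y" using pi_inj piN_pow Suc.prems by blast
  then show ?case using Suc by blast
qed

lemma lemA: "y \<in> N \<Longrightarrow> (pi ^^ t) (al ((pi ^^ t) y)) = al y"
proof (induction t arbitrary: y)
  case 0 then show ?case by simp
next
  case (Suc t)
  have p: "pi (al (pi z)) = al z" if "z \<in> N" for z
    unfolding pi_def using that alal bebe alN beN by simp
  have "(pi ^^ Suc t) (al ((pi ^^ Suc t) y)) = (pi ^^ t) (pi (al (pi ((pi ^^ t) y))))"
    by (simp add: funpow_swap1)
  also have "\<dots> = (pi ^^ t) (al ((pi ^^ t) y))" using p piN_pow Suc.prems by simp
  also have "\<dots> = al y" using Suc by blast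
  finally show ?case .
qed

lemma no_alpha: assumes x: "x \<in> N" shows "(pi ^^ m) x \<noteq> al x"
proof
  assume h: "(pi ^^ m) x = al x"
  obtain s where "m = 2*s \<or> m = 2*s+1" by (metis oddE evenE)
  then show False
  proof
    assume m: "m = 2*s"
    have "(pi ^^ s) (al ((pi ^^ s) x)) = (pi ^^ s) ((pi ^^ s) x)"
      using lemA[OF x, of s] h m by (simp add: funpow_add mult_2)
    then have "al ((pi ^^ s) x) = (pi ^^ s) x"
      using pow_inj alN piN_pow x by blast
    then show False using alf piN_pow x by metis
  next
    assume m: "m = 2*s+1"
    have "(pi ^^ s) (al ((pi ^^ s) x)) = (pi ^^ s) (pi ((pi ^^ s) x))"
      using lemA[OF x, of s] h m by (simp add: funpow_add mult_2 funpow_swap1)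
    then have e: "al ((pi ^^ s) x) = pi ((pi ^^ s) x)"
      using pow_inj alN piN_pow piN x by blast
    have "be (al ((pi ^^ s) x)) = al ((pi ^^ s) x)" using e unfolding pi_def by simp
    then show False using bef alN piN_pow x by metis
  qed
qed

lemma returns: assumes x: "x \<in> N" shows "\<exists>k>0. (pi ^^ k) x = x"
proof -
  have "\<not> inj_on (\<lambda>t. (pi ^^ t) x) {0..card N}"
  proof
    assume "inj_on (\<lambda>t. (pi ^^ t) x) {0..card N}"
    then have "card ((\<lambda>t. (pi ^^ t) x) ` {0..card N}) = card {0..card N}" by (rule card_image)
    moreover have "(\<lambda>t. (pi ^^ t) x) ` {0..card N} \<subseteq> N" using piN_pow x by auto
    then have "card ((\<lambda>t. (pi ^^ t) x) ` {0..card N}) \<le> card N" using fin card_mono by blast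
    ultimately show False by simp
  qed
  then obtain i j where ij: "i \<noteq> j" "(pi ^^ i) x = (pi ^^ j) x" unfolding inj_on_def by blast
  have "\<exists>k>0. (pi ^^ k) x = x" if "i < j" "(pi ^^ i) x = (pi ^^ j) x" for i j
  proof -
    have "(pi ^^ i) ((pi ^^ (j - i)) x) = (pi ^^ (i + (j - i))) x" by (simp add: funpow_add)
    then have "(pi ^^ i) ((pi ^^ (j - i)) x) = (pi ^^ i) x" using that by simp
    then have "(pi ^^ (j - i)) x = x" using pow_inj piN_pow x by blast
    then show ?thesis using that by (intro exI[of _ "j - i"]) auto
  qed
  then show ?thesis using ij by (metis linorder_neqE_nat)
qed

definition "RR x = {(z, al z) | z. z \<in> N} \<union> {(z, be z) | z. z \<in> N \<and> z \<noteq> x \<and> z \<noteq> be x}"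

lemma orbit_path: assumes x: "x \<in> N" shows "(x, be x) \<in> (RR x)\<^sup>*"
proof -
  define k where "k = (LEAST k. k > 0 \<and> (pi ^^ k) x = x)"
  have k: "k > 0" "(pi ^^ k) x = x" using LeastI_ex[OF returns[OF x]] unfolding k_def by auto
  have kmin: "\<not> (0 < t \<and> (pi ^^ t) x = x)" if "t < k" for t
    using not_less_Least[of t "\<lambda>k. k > 0 \<and> (pi ^^ k) x = x"] that unfolding k_def by blast
  have path: "(x, al ((pi ^^ t) x)) \<in> (RR x)\<^sup>*" if "t < k" for t
    using that
  proof (induction t)
    case 0 then show ?case using x unfolding RR_def by auto
  next
    case (Suc t)
    define z where "z = al ((pi ^^ t) x)"
    have zN: "z \<in> N" unfolding z_def using alN piN_pow x by blast
    have "(x, z) \<in> (RR x)\<^sup>*" using Suc unfolding z_def by simp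
    have zx: "z \<noteq> x"
    proof
      assume "z = x"
      then have "al z = al x" by simp
      then have "(pi ^^ t) x = al x" unfolding z_def using alal piN_pow x by simp
      then show False using no_alpha x by blast
    qed
    have zb: "z \<noteq> be x"
    proof
      assume "z = be x"
      then have "be z = x" using bebe x by simp
      then have "(pi ^^ Suc t) x = x" unfolding z_def pi_def by simp
      then show False using kmin Suc.prems by blast
    qed
    have bz: "be z = (pi ^^ Suc t) x" unfolding z_def pi_def by simp
    have "(z, be z) \<in> RR x" using zN zx zb unfolding RR_def by blast
    moreover have "(be z, al (be z)) \<in> RR x" using beN zN unfolding RR_def by blast
    ultimately have "(x, al (be z)) \<in> (RR x)\<^sup>*"
      using \<open>(x, z) \<in> _\<close> by (meson rtrancl.rtrancl_into_rtrancl)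
    then show ?case using bz by simp
  qed
  obtain t where t: "k = Suc t" using k(1) gr0_conv_Suc by blast
  have "(x, al ((pi ^^ t) x)) \<in> (RR x)\<^sup>*" using path t by simp
  moreover have "pi ((pi ^^ t) x) = x" using k(2) t by simp
  then have "be (al ((pi ^^ t) x)) = x" unfolding pi_def by simp
  then have "al ((pi ^^ t) x) = be x" using bebe alN piN_pow x by metis
  ultimately show ?thesis by simp
qed

end

definition ends :: "(int \<times> int) set \<Rightarrow> int set" where
  "ends M = {p. \<exists>q. (p,q) \<in> M \<or> (q,p) \<in> M}"

definition pt :: "(int \<times> int) set \<Rightarrow> int \<Rightarrow> int" where
  "pt M p = (THE q. (p,q) \<in> M \<or> (q,p) \<in> M)"

lemma arc_disj:
  assumes "arc_diagram M" "(i,j) \<in> M" "(k,l) \<in> M" "(i,j) \<noteq> (k,l)"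
  shows "{i,j} \<inter> {k,l} = {}"
  using assms unfolding arc_diagram_def by blast

lemma arc_lt: "arc_diagram M \<Longrightarrow> (i,j) \<in> M \<Longrightarrow> i < j"
  unfolding arc_diagram_def by blast

lemma pt_unique:
  assumes M: "arc_diagram M" and h: "(p,q) \<in> M \<or> (q,p) \<in> M"
  shows "pt M p = q"
  unfolding pt_def
proof (rule the_equality)
  show "(p,q) \<in> M \<or> (q,p) \<in> M" by fact
  fix r assume r: "(p,r) \<in> M \<or> (r,p) \<in> M"
  show "r = q"
  proof (rule ccontr)
    assume "r \<noteq> q"
    from h r show False
    proof (elim disjE)
      assume "(p,q) \<in> M" "(p,r) \<in> M" then show False using arc_disj[OF M] \<open>r \<noteq> q\<close> by blast
    next
      assume "(p,q) \<in> M" "(r,p) \<in> M" then show False using arc_disj[OF M] arc_lt[OF M] by fastforce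
    next
      assume "(q,p) \<in> M" "(p,r) \<in> M" then show False using arc_disj[OF M] arc_lt[OF M] by fastforce
    next
      assume "(q,p) \<in> M" "(r,p) \<in> M" then show False using arc_disj[OF M] \<open>r \<noteq> q\<close> by blast
    qed
  qed
qed

lemma pt_prop:
  assumes M: "arc_diagram M" and p: "p \<in> ends M"
  shows "(p, pt M p) \<in> M \<or> (pt M p, p) \<in> M"
proof -
  obtain q where "(p,q) \<in> M \<or> (q,p) \<in> M" using p unfolding ends_def by blast
  then show ?thesis using pt_unique[OF M] by simp
qed

lemma pt_ends: "arc_diagram M \<Longrightarrow> p \<in> ends M \<Longrightarrow> pt M p \<in> ends M"
  using pt_prop unfolding ends_def by blast
lemma pt_pt: "arc_diagram M \<Longrightarrow> p \<in> ends M \<Longrightarrow> pt M (pt M p) = p"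
  using pt_prop pt_unique by metis
lemma pt_ne: "arc_diagram M \<Longrightarrow> p \<in> ends M \<Longrightarrow> pt M p \<noteq> p"
  using pt_prop arc_lt by fastforce

locale setting =
  fixes a b d :: "(int \<times> int) set" and P :: "int set"
  assumes A: "arc_diagram a" and B: "arc_diagram b" and D: "arc_diagram d"
    and eA: "ends a = P" and eB: "ends b = P" and eD: "ends d = P"
begin

lemma finP: "finite P"
proof -
  have "P \<subseteq> fst ` a \<union> snd ` a" using eA unfolding ends_def by force
  moreover have "finite a" using arc_finite[OF A] .
  ultimately show ?thesis using finite_subset by blast
qed

definition alpha :: "node \<Rightarrow> node" where
  "alpha z = (fst z, pt (if fst z then d else a) (snd z))"
definition beta :: "(int \<times> int) set \<Rightarrow> node \<Rightarrow> node" where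
  "beta S z = (if snd z \<in> ends S then (\<not> fst z, snd z) else (fst z, pt b (snd z)))"

definition "NN = (UNIV :: bool set) \<times> P"

lemma ends_sub: "S \<subseteq> b \<Longrightarrow> ends S \<subseteq> P" using eB unfolding ends_def by blast

lemma ends_S_pt: assumes S: "S \<subseteq> b" and p: "p \<in> P" "p \<notin> ends S" shows "pt b p \<notin> ends S"
proof
  assume h: "pt b p \<in> ends S"
  have pb: "(p, pt b p) \<in> b \<or> (pt b p, p) \<in> b" using pt_prop[OF B] p eB by simp
  obtain r where "(pt b p, r) \<in> S \<or> (r, pt b p) \<in> S" using h unfolding ends_def by blast
  then have "(pt b p, r) \<in> b \<or> (r, pt b p) \<in> b" using S by blast
  then have "r = pt b (pt b p)" using pt_unique[OF B] by metis
  then have "r = p" using pt_pt[OF B] p eB by simp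
  then show False using p(2) \<open>(pt b p, r) \<in> S \<or> _\<close> unfolding ends_def by blast
qed

lemma invol: assumes S: "S \<subseteq> b" shows "invol2 NN alpha (beta S)"
proof
  show "finite NN" unfolding NN_def using finP by simp
  fix z assume z: "z \<in> NN"
  then have p: "snd z \<in> P" unfolding NN_def by auto
  have pa: "snd z \<in> ends (if fst z then d else a)" using p eA eD by simp
  show "alpha z \<in> NN" unfolding alpha_def NN_def using pt_ends[OF _ pa] A D eA eD
    by (cases "fst z") auto
  show "alpha (alpha z) = z" unfolding alpha_def using pt_pt[OF _ pa] A D
    by (cases "fst z") (auto simp: prod_eq_iff)
  show "alpha z \<noteq> z" unfolding alpha_def using pt_ne[OF _ pa] A D
    by (cases "fst z") (auto simp: prod_eq_iff)
  show "beta S z \<in> NN" unfolding beta_def NN_def using p pt_ends[OF B] eB by auto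
  show "beta S (beta S z) = z" unfolding beta_def
    using p ends_S_pt[OF S p] pt_pt[OF B] eB by (auto simp: prod_eq_iff split: if_splits)
  show "beta S z \<noteq> z" unfolding beta_def using pt_ne[OF B] p eB by (auto simp: prod_eq_iff)
qed

end

lemma edges_a: "(p,q) \<in> a \<Longrightarrow> ((False,p),(False,q)) \<in> edges a b d S" unfolding edges_def by blast
lemma edges_d: "(p,q) \<in> d \<Longrightarrow> ((True,p),(True,q)) \<in> edges a b d S" unfolding edges_def by blast
lemma edges_b: "(p,q) \<in> b \<Longrightarrow> (p,q) \<notin> S \<Longrightarrow> ((s,p),(s,q)) \<in> edges a b d S"
  unfolding edges_def by (cases s) blast+
lemma edges_v1: "(p,q) \<in> S \<Longrightarrow> ((False,p),(True,p)) \<in> edges a b d S" unfolding edges_def by blast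
lemma edges_v2: "(q,p) \<in> S \<Longrightarrow> ((False,p),(True,p)) \<in> edges a b d S" unfolding edges_def by blast

context setting begin

lemma nb:
  assumes S: "S \<subseteq> b" and e: "(i,j) \<in> b" "(i,j) \<notin> S"
  shows "conn (edges a (b - {(i,j)}) d S \<union> {((\<not>s,i),(\<not>s,j))}) (s,i) (s,j)"
proof -
  interpret invol2 NN alpha "beta S" using invol[OF S] .
  define E1 where "E1 = edges a (b - {(i,j)}) d S \<union> {((\<not>s,i),(\<not>s,j))}"
  have iP: "i \<in> P" using e eB unfolding ends_def by blast
  have ptij: "pt b i = j" using pt_unique[OF B] e by blast
  have iS: "i \<notin> ends S"
  proof
    assume "i \<in> ends S"
    then obtain r where "(i,r) \<in> S \<or> (r,i) \<in> S" unfolding ends_def by blast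
    then have "(i,r) \<in> S" using S arc_disj[OF B] arc_lt[OF B] e by fastforce
    then have "r = j" using pt_unique[OF B, of i r] S ptij by blast
    then show False using \<open>(i,r) \<in> S\<close> e by simp
  qed
  define x where "x = (s,i)"
  have xN: "x \<in> NN" unfolding x_def NN_def using iP by simp
  have bx: "beta S x = (s,j)" unfolding x_def beta_def using iS ptij by simp
  have steps: "conn E1 z z'" if "(z,z') \<in> RR x" for z z'
  proof -
    from that consider (al) "z \<in> NN" "z' = alpha z" | (be) "z \<in> NN" "z \<noteq> x" "z \<noteq> beta S x" "z' = beta S z"
      unfolding RR_def by blast
    then show ?thesis
    proof cases
      case al
      obtain s' p where z: "z = (s',p)" by force
      have p: "p \<in> P" using al z unfolding NN_def by auto
      show ?thesis
      proof (cases s')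
        case True
        have "(p, pt d p) \<in> d \<or> (pt d p, p) \<in> d" using pt_prop[OF D] p eD by simp
        then show ?thesis using al z True unfolding alpha_def E1_def
          by (auto intro: conn_edge conn_edge' edges_d)
      next
        case False
        have "(p, pt a p) \<in> a \<or> (pt a p, p) \<in> a" using pt_prop[OF A] p eA by simp
        then show ?thesis using al z False unfolding alpha_def E1_def
          by (auto intro: conn_edge conn_edge' edges_a)
      qed
    next
      case be
      obtain s' p where z: "z = (s',p)" by force
      have p: "p \<in> P" using be z unfolding NN_def by auto
      show ?thesis
      proof (cases "p \<in> ends S")
        case True
        then obtain q where "(p,q) \<in> S \<or> (q,p) \<in> S" unfolding ends_def by blast
        then have v: "((False,p),(True,p)) \<in> E1" unfolding E1_def using edges_v1 edges_v2 by blast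
        have "z' = (\<not> s', p)" using be z True unfolding beta_def by simp
        then show ?thesis using v z by (cases s') (auto intro: conn_edge conn_edge')
      next
        case False
        define q where "q = pt b p"
        have z': "z' = (s', q)" using be z False unfolding beta_def q_def by simp
        have pq: "(p, q) \<in> b \<or> (q, p) \<in> b" using pt_prop[OF B] p eB unfolding q_def by simp
        have nS: "(p,q) \<notin> S" "(q,p) \<notin> S" using False unfolding ends_def by blast+
        show ?thesis
        proof (cases "(p,q) = (i,j) \<or> (q,p) = (i,j)")
          case True
          have "s' = (\<not> s)" using True be(2,3) bx z unfolding x_def by auto
          then show ?thesis using True z z' unfolding E1_def by (auto intro: conn_edge conn_edge')
        next
          case False
          have "((s',p),(s',q)) \<in> E1 \<or> ((s',q),(s',p)) \<in> E1"
            using pq nS False unfolding E1_def by (meson DiffI UnI1 edges_b singletonD)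
          then show ?thesis using z z' by (auto intro: conn_edge conn_edge')
        qed
      qed
    qed
  qed
  have "(x, beta S x) \<in> (RR x)\<^sup>*" using orbit_path[OF xN] .
  then have "conn E1 x (beta S x)"
  proof (induction rule: rtrancl_induct)
    case base then show ?case by simp
  next
    case (step y z) then show ?case using steps conn_trans by blast
  qed
  then show ?thesis unfolding bx unfolding E1_def x_def .
qed

end

lemma edges_decomp:
  assumes "(i,j) \<in> b" "(i,j) \<notin> S"
  shows "edges a b d S = edges a (b - {(i,j)}) d S \<union> {((False,i),(False,j)),((True,i),(True,j))}"
    "edges a b d (insert (i,j) S) = edges a (b - {(i,j)}) d S \<union> {((False,i),(True,i)),((False,j),(True,j))}"
  using assms unfolding edges_def by auto

context setting begin

lemma step:
  assumes S: "S \<subseteq> b" and e: "(i,j) \<in> b" "(i,j) \<notin> S" and X: "arc_diagram X"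
    and cs: "cons (edges a b d S) L" and L1: "L1 \<in> set (surg_step a b d S L (i,j))"
  shows "cons (edges a b d (insert (i,j) S)) L1 \<and>
    Phi s (edges a b d (insert (i,j) S)) L1 X v \<le> Phi s (edges a b d S) L X v"
proof -
  interpret surgery "edges a (b - {(i,j)}) d S" "(False,i)" "(True,i)" "(False,j)" "(True,j)" .
  have EEe: "EE = edges a b d S" unfolding EE_def using edges_decomp(1)[OF e] by simp
  have EE'e: "EE' = edges a b d (insert (i,j) S)" unfolding EE'_def using edges_decomp(2)[OF e] by simp
  have cs0: "cons EE L" using cs EEe by simp
  define relab where "relab = (\<lambda>al be x. if conn EE' (False,i) x then al
       else if conn EE' (False,j) x then be else L x)"
  have ss: "surg_step a b d S L (i,j) = (if \<not> conn EE (False,i) (True,i) then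
      (if \<not> L (False,i) \<and> \<not> L (True,i) then []
       else [\<lambda>x. if conn EE' (False,i) x then L (False,i) \<and> L (True,i) else L x])
     else (if L (False,i) then [relab True False, relab False True] else [relab False False]))"
    unfolding surg_step_def Let_def EEe[symmetric] EE'e[symmetric] relab_def by simp
  show ?thesis
  proof (cases "conn EE (False,i) (True,i)")
    case False
    have nbF: "conn (edges a (b - {(i,j)}) d S \<union> {((True,i),(True,j))}) (False,i) (False,j)"
      using nb[OF S e, of False] by simp
    have nbT: "conn (edges a (b - {(i,j)}) d S \<union> {((False,i),(False,j))}) (True,i) (True,j)"
      using nb[OF S e, of True] by simp
    have nb1: "conn (edges a (b - {(i,j)}) d S) (False,i) (False,j)"
    proof (rule conn_restrict[OF nbF])
      fix p q assume pq: "(p,q) \<in> {((True,i),(True,j))}"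
        and c: "conn (edges a (b - {(i, j)}) d S \<union> {((True, i), True, j)}) (False, i) p"
      have "conn EE (False,i) p" using conn_mono[OF c, of EE] unfolding EE_def by auto
      then show False using pq False by simp
    qed
    have nb2: "conn (edges a (b - {(i,j)}) d S) (True,i) (True,j)"
    proof (rule conn_restrict[OF nbT])
      fix p q assume pq: "(p,q) \<in> {((False,i),(False,j))}"
        and c: "conn (edges a (b - {(i, j)}) d S \<union> {((False, i), False, j)}) (True, i) p"
      have "conn EE (True,i) p" using conn_mono[OF c, of EE] unfolding EE_def by auto
      then have "conn EE (True,i) (False,i)" using pq by simp
      then show False using False conn_sym[of EE "(True,i)" "(False,i)"] by simp
    qed
    have lab: "L (False,i) \<or> L (True,i)"
    proof (rule ccontr)
      assume "\<not> (L (False,i) \<or> L (True,i))"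
      then have "surg_step a b d S L (i,j) = []" using ss False by simp
      then show False using L1 by simp
    qed
    have "surg_step a b d S L (i,j) = [\<lambda>x. if conn EE' (False,i) x then L (False,i) \<and> L (True,i) else L x]"
      using ss False lab by simp
    then have L1e: "L1 = (\<lambda>x. if conn EE' (False,i) x then L (False,i) \<and> L (True,i) else L x)"
      using L1 by simp
    show ?thesis using merge_step[OF X nb1 nb2 False cs0 L1e lab] EEe EE'e by simp
  next
    case True
    have "\<exists>al be. L1 = relab al be \<and> (if L (False,i) then al \<noteq> be else \<not> al \<and> \<not> be)"
    proof (cases "L (False,i)")
      case T: True
      then have "L1 = relab True False \<or> L1 = relab False True" using L1 ss True by simp
      then show ?thesis
      proof
        assume "L1 = relab True False" then show ?thesis using T by (intro exI[of _ True] exI[of _ False]) simp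
      next
        assume "L1 = relab False True" then show ?thesis using T by (intro exI[of _ False] exI[of _ True]) simp
      qed
    next
      case F: False
      then have "L1 = relab False False" using L1 ss True by simp
      then show ?thesis using F by (intro exI[of _ False] exI[of _ False]) simp
    qed
    then obtain al be where L1r: "L1 = relab al be"
      and lab: "if L (False,i) then al \<noteq> be else \<not> al \<and> \<not> be" by blast
    have L1e: "L1 = (\<lambda>x. if conn EE' (False,i) x then al else if conn EE' (False,j) x then be else L x)"
      using L1r unfolding relab_def by simp
    show ?thesis using split_step[OF X True cs0 L1e lab] EEe EE'e by simp
  qed
qed

lemma surg_main:
  assumes "S \<subseteq> b" "set es \<subseteq> b - S" "distinct es" "arc_diagram X"
    "cons (edges a b d S) L" "L' \<in> set (surg a b d S L es)"
  shows "cons (edges a b d (S \<union> set es)) L' \<and>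
    Phi s (edges a b d (S \<union> set es)) L' X v \<le> Phi s (edges a b d S) L X v"
  using assms
proof (induction es arbitrary: S L)
  case Nil then show ?case by simp
next
  case (Cons e es)
  obtain i j where e: "e = (i,j)" by force
  from Cons.prems(6) obtain L1 where L1: "L1 \<in> set (surg_step a b d S L e)"
    and L': "L' \<in> set (surg a b d (insert e S) L1 es)" by auto
  have st: "cons (edges a b d (insert e S)) L1 \<and>
    Phi s (edges a b d (insert e S)) L1 X v \<le> Phi s (edges a b d S) L X v"
    using step[OF Cons.prems(1) _ _ Cons.prems(4) Cons.prems(5)] L1 Cons.prems(2) e by auto
  have ih: "cons (edges a b d (insert e S \<union> set es)) L' \<and>
    Phi s (edges a b d (insert e S \<union> set es)) L' X v \<le> Phi s (edges a b d (insert e S)) L1 X v"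
    using Cons.IH[of "insert e S" L1] Cons.prems st L' by auto
  have "insert e S \<union> set es = S \<union> set (e # es)" by auto
  then show ?case using st ih by auto
qed

end

definition RM :: "(int \<times> int) set \<Rightarrow> (int \<times> int) set" where
  "RM M = {(p,q). (p,q) \<in> M \<or> (q,p) \<in> M}"
definition cls :: "(int \<times> int) set \<Rightarrow> int \<Rightarrow> int set" where
  "cls M x = {y. (x,y) \<in> (RM M)\<^sup>*}"
definition Ncnt :: "(int \<times> int) set \<Rightarrow> int set \<Rightarrow> int \<Rightarrow> nat" where
  "Ncnt X C t = card {e\<in>X. fst e \<in> C \<and> fst e < t \<and> t \<le> snd e}"

lemma arc_lt': "arc_diagram X \<Longrightarrow> e \<in> X \<Longrightarrow> fst e < snd e"
  using arc_lt[of X "fst e" "snd e"] by simp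

lemma card_int_sum: "finite A \<Longrightarrow> int (card {e\<in>A. Q e}) = (\<Sum>e\<in>A. of_bool (Q e))"
proof -
  assume f: "finite A"
  have "A \<inter> {x. Q x} = {e\<in>A. Q e}" by auto
  moreover have "(\<Sum>x\<in>A. (of_bool (Q x)::int)) = int (card (A \<inter> {x. Q x}))" using f by simp
  ultimately show ?thesis by simp
qed

lemma parity_core:
  assumes X: "arc_diagram X" and M: "arc_diagram M" and finC: "finite C"
    and CX: "C \<subseteq> ends X" and CM: "C \<subseteq> ends M"
    and clX: "\<And>p q. (p,q) \<in> X \<Longrightarrow> p \<in> C \<longleftrightarrow> q \<in> C"
    and clM: "\<And>p q. (p,q) \<in> M \<Longrightarrow> p \<in> C \<longleftrightarrow> q \<in> C"
    and xy: "(x,y) \<in> M" and xC: "x \<in> C"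
  shows "odd (Ncnt X C x) \<noteq> odd (Ncnt X C y)"
proof -
  define A where "A = {e\<in>X. fst e \<in> C}"
  have finA: "finite A" unfolding A_def using arc_finite[OF X] by simp
  have xly: "x < y" using arc_lt[OF M xy] .
  have injf: "inj_on fst A" and injs: "inj_on snd A"
  proof -
    show "inj_on fst A"
    proof (rule inj_onI)
      fix e e' assume "e \<in> A" "e' \<in> A" "fst e = fst e'"
      then show "e = e'" using arc_facts[OF X, of e e'] unfolding A_def by auto
    qed
    show "inj_on snd A"
    proof (rule inj_onI)
      fix e e' assume "e \<in> A" "e' \<in> A" "snd e = snd e'"
      then show "e = e'" using arc_facts[OF X, of e e'] unfolding A_def by auto
    qed
  qed
  have disfs: "fst e \<noteq> snd e'" if "e \<in> A" "e' \<in> A" for e e'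
  proof (cases "e = e'")
    case True then show ?thesis using arc_lt'[OF X, of e] that unfolding A_def by auto
  next
    case False then show ?thesis using arc_facts[OF X, of e e'] that unfolding A_def by auto
  qed
  have Ceq: "C = fst ` A \<union> snd ` A"
  proof (rule set_eqI, rule iffI)
    fix z assume z: "z \<in> C"
    then obtain q where "(z,q) \<in> X \<or> (q,z) \<in> X" using CX unfolding ends_def by blast
    then show "z \<in> fst ` A \<union> snd ` A"
    proof
      assume "(z,q) \<in> X" then have "(z,q) \<in> A" using z unfolding A_def by simp
      then show ?thesis by force
    next
      assume h: "(q,z) \<in> X" then have "(q,z) \<in> A" using z clX[OF h] unfolding A_def by simp
      then show ?thesis by force
    qed
  next
    fix z assume "z \<in> fst ` A \<union> snd ` A"
    then show "z \<in> C" unfolding A_def using clX by force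
  qed
  define I where "I = {x..<y}"
  define F where "F = (\<Sum>e\<in>A. (of_bool (fst e \<in> I) :: int))"
  define G where "G = (\<Sum>e\<in>A. (of_bool (snd e \<in> I) :: int))"
  have NA: "int (Ncnt X C t) = (\<Sum>e\<in>A. of_bool (fst e < t \<and> t \<le> snd e))" for t
  proof -
    have "{e\<in>X. fst e \<in> C \<and> fst e < t \<and> t \<le> snd e} = {e\<in>A. fst e < t \<and> t \<le> snd e}"
      unfolding A_def by auto
    then show ?thesis unfolding Ncnt_def using card_int_sum[OF finA] by simp
  qed
  have termw: "(of_bool (fst e < y \<and> y \<le> snd e) :: int) - of_bool (fst e < x \<and> x \<le> snd e)
      = of_bool (fst e \<in> I) - of_bool (snd e \<in> I)" if "e \<in> A" for e
  proof -
    have "fst e < snd e" using arc_lt'[OF X, of e] that unfolding A_def by auto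
    then show ?thesis unfolding I_def using xly by auto
  qed
  have diff: "int (Ncnt X C y) - int (Ncnt X C x) = F - G"
    unfolding NA F_def G_def sum_subtractf[symmetric] using termw by (intro sum.cong) auto
  have cardI: "int (card (C \<inter> I)) = F + G"
  proof -
    have "C \<inter> I = (fst ` A \<inter> I) \<union> (snd ` A \<inter> I)" using Ceq by blast
    moreover have "(fst ` A \<inter> I) \<inter> (snd ` A \<inter> I) = {}" using disfs by fastforce
    moreover have "finite (fst ` A \<inter> I)" "finite (snd ` A \<inter> I)" using finA by auto
    ultimately have "card (C \<inter> I) = card (fst ` A \<inter> I) + card (snd ` A \<inter> I)"
      by (simp add: card_Un_disjoint)
    moreover have "fst ` A \<inter> I = fst ` {e\<in>A. fst e \<in> I}" by auto
    moreover have "snd ` A \<inter> I = snd ` {e\<in>A. snd e \<in> I}" by auto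
    moreover have "card (fst ` {e\<in>A. fst e \<in> I}) = card {e\<in>A. fst e \<in> I}"
      using injf by (intro card_image) (auto intro: inj_on_subset)
    moreover have "card (snd ` {e\<in>A. snd e \<in> I}) = card {e\<in>A. snd e \<in> I}"
      using injs by (intro card_image) (auto intro: inj_on_subset)
    ultimately show ?thesis unfolding F_def G_def using card_int_sum[OF finA] by simp
  qed
  define M' where "M' = {e\<in>M. x < fst e \<and> snd e < y \<and> fst e \<in> C}"
  have inner: "C \<inter> {x<..<y} = fst ` M' \<union> snd ` M'"
  proof (rule set_eqI, rule iffI)
    fix z assume z: "z \<in> C \<inter> {x<..<y}"
    then obtain q where "(z,q) \<in> M \<or> (q,z) \<in> M" using CM unfolding ends_def by blast
    then show "z \<in> fst ` M' \<union> snd ` M'"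
    proof
      assume f: "(z,q) \<in> M"
      have ne: "(x,y) \<noteq> (z,q)" using z by auto
      have "q \<noteq> y" using arc_disj[OF M xy f ne] by auto
      moreover have "\<not> (x < z \<and> z < y \<and> y < q)" using arc_facts(6)[OF M xy f ne] by simp
      ultimately have "q < y" using z by auto
      then have "(z,q) \<in> M'" using f z unfolding M'_def by auto
      then show ?thesis by force
    next
      assume f: "(q,z) \<in> M"
      have ne: "(x,y) \<noteq> (q,z)" using z by auto
      have "q \<noteq> x" using arc_disj[OF M xy f ne] by auto
      moreover have "\<not> (q < x \<and> x < z \<and> z < y)" using arc_facts(6)[OF M f xy ne[symmetric]] by simp
      moreover have "q < z" using arc_lt[OF M f] .
      ultimately have "x < q" using z by auto
      moreover have "q \<in> C" using clM[OF f] z by auto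
      ultimately have "(q,z) \<in> M'" using f z unfolding M'_def by auto
      then show ?thesis by force
    qed
  next
    fix z assume "z \<in> fst ` M' \<union> snd ` M'"
    then obtain e where e: "e \<in> M'" "z = fst e \<or> z = snd e" by blast
    have "fst e < snd e" using arc_lt'[OF M, of e] e unfolding M'_def by auto
    moreover have "snd e \<in> C" using clM[of "fst e" "snd e"] e unfolding M'_def by simp
    ultimately show "z \<in> C \<inter> {x<..<y}" using e unfolding M'_def by auto
  qed
  have finM': "finite M'" unfolding M'_def using arc_finite[OF M] by simp
  have cardM': "card (C \<inter> {x<..<y}) = 2 * card M'"
  proof -
    have "fst ` M' \<inter> snd ` M' = {}"
    proof (rule ccontr)
      assume "fst ` M' \<inter> snd ` M' \<noteq> {}"
      then obtain e e' where e: "e \<in> M'" "e' \<in> M'" "fst e = snd e'" by force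
      show False
      proof (cases "e = e'")
        case True then show False using arc_lt'[OF M, of e] e unfolding M'_def by auto
      next
        case False then show False using arc_facts[OF M, of e e'] e
          unfolding M'_def by auto
      qed
    qed
    moreover have "inj_on fst M'"
    proof (rule inj_onI)
      fix e e' assume "e \<in> M'" "e' \<in> M'" "fst e = fst e'"
      then show "e = e'" using arc_facts[OF M, of e e'] unfolding M'_def by auto
    qed
    moreover have "inj_on snd M'"
    proof (rule inj_onI)
      fix e e' assume "e \<in> M'" "e' \<in> M'" "snd e = snd e'"
      then show "e = e'" using arc_facts[OF M, of e e'] unfolding M'_def by auto
    qed
    ultimately show ?thesis unfolding inner using finM'
      by (simp add: card_Un_disjoint card_image)
  qed
  have "C \<inter> I = insert x (C \<inter> {x<..<y})" unfolding I_def using xC xly by auto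
  moreover have "x \<notin> C \<inter> {x<..<y}" by simp
  moreover have "finite (C \<inter> {x<..<y})" using finC by simp
  ultimately have "card (C \<inter> I) = Suc (2 * card M')" using cardM' by simp
  then have "int (Ncnt X C y) - int (Ncnt X C x) = 1 + 2 * int (card M') - 2 * G"
    using diff cardI by linarith
  then show ?thesis by presburger
qed

lemma cls_step: "y \<in> cls M x \<Longrightarrow> (y,z) \<in> RM M \<Longrightarrow> z \<in> cls M x"
  unfolding cls_def by (meson mem_Collect_eq rtrancl.rtrancl_into_rtrancl)
lemma cls_self: "x \<in> cls M x" unfolding cls_def by simp
lemma RM_sym: "(y,z) \<in> RM M \<Longrightarrow> (z,y) \<in> RM M" unfolding RM_def by auto
lemma cls_sym: "y \<in> cls M x \<Longrightarrow> x \<in> cls M y"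
proof -
  assume "y \<in> cls M x"
  then have "(x,y) \<in> (RM M)\<^sup>*" unfolding cls_def by simp
  then have "(y,x) \<in> ((RM M)\<inverse>)\<^sup>*" by (simp add: rtrancl_converse)
  moreover have "(RM M)\<inverse> = RM M" using RM_sym by auto
  ultimately show ?thesis unfolding cls_def by simp
qed
lemma cls_trans: "y \<in> cls M x \<Longrightarrow> z \<in> cls M y \<Longrightarrow> z \<in> cls M x"
  unfolding cls_def by (meson mem_Collect_eq rtrancl_trans)
lemma cls_eq: "y \<in> cls M x \<Longrightarrow> cls M y = cls M x"
  using cls_trans cls_sym by blast

lemma cls_sub:
  assumes "ends M = P" "x \<in> P" shows "cls M x \<subseteq> P"
proof
  fix y assume "y \<in> cls M x"
  then have "(x,y) \<in> (RM M)\<^sup>*" unfolding cls_def by simp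
  then show "y \<in> P"
  proof (induction rule: rtrancl_induct)
    case base then show ?case using assms by simp
  next
    case (step y z) then show ?case using assms(1) unfolding RM_def ends_def by blast
  qed
qed

definition orients :: "(int \<times> int) set \<Rightarrow> weight \<Rightarrow> bool" where
  "orients M w \<longleftrightarrow> (\<forall>(p,q)\<in>M. {w p, w q} = {Some Down, Some Up})"

lemma orients_D: "orients M w \<Longrightarrow> (p,q) \<in> M \<Longrightarrow> (w p = Some Down) \<noteq> (w q = Some Down)"
  unfolding orients_def by (auto simp: doubleton_eq_iff)

lemma parity_prop:
  assumes X: "arc_diagram X" and M2: "arc_diagram M2" and eX: "ends X = P" and eM: "ends M2 = P"
    and finP: "finite P" and x0: "x0 \<in> P" and oX: "orients X w" and oM: "orients M2 w"
    and C: "C = cls (X \<union> M2) x0" and y: "y \<in> C"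
  shows "((w y = Some Down) \<noteq> odd (Ncnt X C y)) = ((w x0 = Some Down) \<noteq> odd (Ncnt X C x0))"
proof -
  have eU: "ends (X \<union> M2) = P" using eX eM unfolding ends_def by blast
  have CP: "C \<subseteq> P" using cls_sub[OF eU x0] C by simp
  have finC: "finite C" using finite_subset[OF CP finP] .
  have cl: "p \<in> C \<longleftrightarrow> q \<in> C" if "(p,q) \<in> X \<union> M2" for p q
  proof -
    have "(p,q) \<in> RM (X \<union> M2)" "(q,p) \<in> RM (X \<union> M2)" using that unfolding RM_def by auto
    then show ?thesis using cls_step C by blast
  qed
  have core: "odd (Ncnt X C p) \<noteq> odd (Ncnt X C q)" if "(p,q) \<in> X \<or> (p,q) \<in> M2" "p \<in> C" for p q
  proof -
    have clX: "\<And>p q. (p,q) \<in> X \<Longrightarrow> p \<in> C \<longleftrightarrow> q \<in> C" using cl by blast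
    have clM: "\<And>p q. (p,q) \<in> M2 \<Longrightarrow> p \<in> C \<longleftrightarrow> q \<in> C" using cl by blast
    from that(1) show ?thesis
    proof
      assume "(p,q) \<in> X"
      then show ?thesis using parity_core[OF X X finC _ _ clX clX _ that(2)] CP eX by blast
    next
      assume "(p,q) \<in> M2"
      then show ?thesis using parity_core[OF X M2 finC _ _ clX clM _ that(2)] CP eX eM by blast
    qed
  qed
  have "(x0, y) \<in> (RM (X \<union> M2))\<^sup>*" using y C unfolding cls_def by simp
  then show ?thesis
  proof (induction rule: rtrancl_induct)
    case base then show ?case by simp
  next
    case (step y z)
    have yC: "y \<in> C" using step.hyps(1) C unfolding cls_def by simp
    have zC: "z \<in> C" using cls_step[OF _ step.hyps(2)] yC C by simp
    from step.hyps(2) have "(y,z) \<in> X \<union> M2 \<or> (z,y) \<in> X \<union> M2" unfolding RM_def by simp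
    then have "(w y = Some Down) \<noteq> (w z = Some Down) \<and> odd (Ncnt X C y) \<noteq> odd (Ncnt X C z)"
    proof
      assume h: "(y,z) \<in> X \<union> M2"
      then show ?thesis using core[of y z] yC orients_D[OF oX] orients_D[OF oM] by blast
    next
      assume h: "(z,y) \<in> X \<union> M2"
      then show ?thesis using core[of z y] zC orients_D[OF oX] orients_D[OF oM] by blast
    qed
    then show ?case using step.IH by blast
  qed
qed

lemma ident:
  assumes X: "arc_diagram X" and M2: "arc_diagram M2" and eX: "ends X = P" and eM: "ends M2 = P"
    and finP: "finite P" and x: "x \<in> P" and oX: "orients X w" and oM: "orients M2 w"
  shows "(w x = Some Down) = ((w (Min (cls (X \<union> M2) x)) = Some Down) \<noteq> odd (Ncnt X (cls (X \<union> M2) x) x))"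
proof -
  define C where "C = cls (X \<union> M2) x"
  have eU: "ends (X \<union> M2) = P" using eX eM unfolding ends_def by blast
  have CP: "C \<subseteq> P" using cls_sub[OF eU x] C_def by simp
  have finC: "finite C" using finite_subset[OF CP finP] .
  have mC: "Min C \<in> C" using finC cls_self[of x] C_def Min_in by blast
  have n0: "Ncnt X C (Min C) = 0"
  proof -
    have "{e\<in>X. fst e \<in> C \<and> fst e < Min C \<and> Min C \<le> snd e} = {}" using Min_le[OF finC] by force
    then show ?thesis unfolding Ncnt_def by (metis card.empty)
  qed
  show ?thesis using parity_prop[OF X M2 eX eM finP x oX oM C_def mC] n0 unfolding C_def[symmetric] by auto
qed

lemma dv_ident:
  assumes X: "arc_diagram X" and M2: "arc_diagram M2" and eX: "ends X = P" and eM: "ends M2 = P"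
    and finP: "finite P" and oX: "orients X w" and oM: "orients M2 w"
    and cE: "\<And>p q. p \<in> P \<Longrightarrow> conn E (s,p) (s,q) \<longleftrightarrow> q \<in> cls (X \<union> M2) p"
    and Lw: "\<And>p. p \<in> P \<Longrightarrow> L (s,p) = (w (Min (cls (X \<union> M2) p)) = Some Down)"
    and e: "e \<in> X"
  shows "Dv s E L X e = (w (fst e) = Some Down)"
proof -
  have p: "fst e \<in> P" using e eX unfolding ends_def by (metis (mono_tags, lifting) mem_Collect_eq prod.collapse)
  define C where "C = cls (X \<union> M2) (fst e)"
  have "{e'\<in>X. encl e' e \<and> conn E (s, fst e) (s, fst e')} = {e'\<in>X. fst e' \<in> C \<and> fst e' < fst e \<and> fst e \<le> snd e'}"
  proof (rule set_eqI, rule iffI)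
    fix e' assume "e' \<in> {e'\<in>X. encl e' e \<and> conn E (s, fst e) (s, fst e')}"
    then show "e' \<in> {e'\<in>X. fst e' \<in> C \<and> fst e' < fst e \<and> fst e \<le> snd e'}"
      using cE[OF p] arc_lt'[OF X e] unfolding C_def encl_def by auto
  next
    fix e' assume h: "e' \<in> {e'\<in>X. fst e' \<in> C \<and> fst e' < fst e \<and> fst e \<le> snd e'}"
    then have ne: "e' \<noteq> e" by auto
    note f = arc_facts[OF X _ e ne] 
    have "snd e' \<noteq> fst e" using f h by auto
    then have "fst e < snd e'" using h by auto
    then have "\<not> snd e' < snd e" using f h by auto
    then have "snd e < snd e'" using f h by fastforce
    then show "e' \<in> {e'\<in>X. encl e' e \<and> conn E (s, fst e) (s, fst e')}"
      using h cE[OF p] unfolding C_def encl_def by auto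
  qed
  then have "Dv s E L X e = (L (s, fst e) \<noteq> odd (Ncnt X C (fst e)))"
    unfolding Dv_def Ncnt_def by simp
  also have "\<dots> = (w (fst e) = Some Down)"
    using ident[OF X M2 eX eM finP p oX oM] Lw[OF p] unfolding C_def by simp
  finally show ?thesis .
qed

lemma conn_comp_eq: "conn E x y \<Longrightarrow> {u. conn E x u} = {u. conn E y u}"
  using conn_trans conn_sym by blast

context setting begin

lemma E0_step: "(z,z') \<in> edges a b d {} \<or> (z',z) \<in> edges a b d {} \<Longrightarrow>
   fst z' = fst z \<and> (snd z, snd z') \<in> RM (if fst z then d \<union> b else a \<union> b)"
  unfolding edges_def RM_def by auto

lemma E0_fst: "conn (edges a b d {}) x y \<Longrightarrow> fst y = fst x \<and> snd y \<in> cls (if fst x then d \<union> b else a \<union> b) (snd x)"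
proof (induction rule: conn_induct)
  case refl then show ?case by (simp add: cls_self)
next
  case (step z z')
  have h: "fst z' = fst z" "(snd z, snd z') \<in> RM (if fst z then d \<union> b else a \<union> b)"
    using E0_step[OF step.hyps(2)] by auto
  have "fst z = fst x" "snd z \<in> cls (if fst x then d \<union> b else a \<union> b) (snd x)" using step.IH by auto
  then show ?case using h cls_step[of "snd z" _ "snd x" "snd z'"] by simp
qed

lemma E0_back:
  assumes "q \<in> cls (if s then d \<union> b else a \<union> b) p"
  shows "conn (edges a b d {}) (s,p) (s,q)"
proof -
  have "(p,q) \<in> (RM (if s then d \<union> b else a \<union> b))\<^sup>*" using assms unfolding cls_def by simp
  then show ?thesis
  proof (induction rule: rtrancl_induct)
    case base then show ?case by simp
  next
    case (step y z)
    have "((s,y),(s,z)) \<in> edges a b d {} \<or> ((s,z),(s,y)) \<in> edges a b d {}"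
      using step.hyps(2) unfolding RM_def edges_def by (cases s) auto
    then have "conn (edges a b d {}) (s,y) (s,z)" using conn_edge conn_edge' by blast
    then show ?case using step.IH conn_trans by blast
  qed
qed

lemma E0_comp: "snd ` {u. conn (edges a b d {}) (s,p) u} = cls (if s then d \<union> b else a \<union> b) p"
proof (rule set_eqI, rule iffI)
  fix q assume "q \<in> snd ` {u. conn (edges a b d {}) (s,p) u}"
  then obtain u where "conn (edges a b d {}) (s,p) u" "q = snd u" by blast
  then show "q \<in> cls (if s then d \<union> b else a \<union> b) p" using E0_fst by fastforce
next
  fix q assume "q \<in> cls (if s then d \<union> b else a \<union> b) p"
  then have "conn (edges a b d {}) (s,p) (s,q)" using E0_back by blast
  then show "q \<in> snd ` {u. conn (edges a b d {}) (s,p) u}" by force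
qed

lemma E0_conn_iff: "conn (edges a b d {}) (s,p) (s,q) \<longleftrightarrow> q \<in> cls (if s then d \<union> b else a \<union> b) p"
  using E0_fst[of "(s,p)" "(s,q)"] E0_back by auto

lemma init_cons: "cons (edges a b d {}) (init_labels a b d lam mu)"
  unfolding cons_def
proof (intro allI impI)
  fix x y assume c: "conn (edges a b d {}) x y"
  have "fst y = fst x" using E0_fst[OF c] by simp
  moreover have "{u. conn (edges a b d {}) x u} = {u. conn (edges a b d {}) y u}" using conn_comp_eq[OF c] .
  ultimately show "init_labels a b d lam mu x = init_labels a b d lam mu y"
    unfolding init_labels_def Let_def by simp
qed

lemma init_val: "init_labels a b d lam mu (s,p) =
  (if s then mu (Min (cls (d \<union> b) p)) = Some Down else lam (Min (cls (a \<union> b) p)) = Some Down)"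
  unfolding init_labels_def Let_def E0_comp by simp

lemma Eb_step: "(z,z') \<in> edges a b d b \<or> (z',z) \<in> edges a b d b \<Longrightarrow>
   snd z' = snd z \<or> (snd z, snd z') \<in> RM (a \<union> d)"
  unfolding edges_def RM_def by auto

lemma Eb_fwd: "conn (edges a b d b) x y \<Longrightarrow> snd y \<in> cls (a \<union> d) (snd x)"
proof (induction rule: conn_induct)
  case refl then show ?case by (simp add: cls_self)
next
  case (step z z')
  from Eb_step[OF step.hyps(2)] show ?case
  proof
    assume "snd z' = snd z" then show ?thesis using step.IH by simp
  next
    assume "(snd z, snd z') \<in> RM (a \<union> d)" then show ?thesis using step.IH cls_step by blast
  qed
qed

lemma vert: "p \<in> P \<Longrightarrow> conn (edges a b d b) (s,p) (s',p)"
proof -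
  assume "p \<in> P"
  then obtain q where "(p,q) \<in> b \<or> (q,p) \<in> b" using eB unfolding ends_def by blast
  then have e: "((False,p),(True,p)) \<in> edges a b d b" unfolding edges_def by blast
  show ?thesis using conn_edge[OF e] conn_edge'[OF e] by (cases s; cases s') auto
qed

lemma Eb_back:
  assumes p: "p \<in> P" and q: "q \<in> cls (a \<union> d) p"
  shows "conn (edges a b d b) (s,p) (s',q)"
proof -
  have eU: "ends (a \<union> d) = P" using eA eD unfolding ends_def by blast
  have "(p,q) \<in> (RM (a \<union> d))\<^sup>*" using q unfolding cls_def by simp
  then have "\<forall>s'. conn (edges a b d b) (s,p) (s',q)"
  proof (induction rule: rtrancl_induct)
    case base then show ?case using vert[OF p] by blast
  next
    case (step y z)
    have yP: "z \<in> P" using step.hyps(2) eU unfolding RM_def ends_def by blast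
    from step.hyps(2) have "(y,z) \<in> a \<or> (z,y) \<in> a \<or> (y,z) \<in> d \<or> (z,y) \<in> d" unfolding RM_def by auto
    then have "conn (edges a b d b) (False,y) (False,z) \<or> conn (edges a b d b) (True,y) (True,z)"
      by (auto intro: conn_edge conn_edge' edges_a edges_d)
    then show ?case using step.IH conn_trans vert[OF yP] by metis
  qed
  then show ?thesis by blast
qed

lemma Eb_comp: "p \<in> P \<Longrightarrow> snd ` {u. conn (edges a b d b) (s,p) u} = cls (a \<union> d) p"
proof (rule set_eqI, rule iffI)
  fix q assume "q \<in> snd ` {u. conn (edges a b d b) (s,p) u}"
  then obtain u where "conn (edges a b d b) (s,p) u" "q = snd u" by blast
  then show "q \<in> cls (a \<union> d) p" using Eb_fwd by fastforce
next
  fix q assume "p \<in> P" "q \<in> cls (a \<union> d) p"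
  then have "conn (edges a b d b) (s,p) (s,q)" using Eb_back by blast
  then show "q \<in> snd ` {u. conn (edges a b d b) (s,p) u}" by force
qed

lemma Eb_conn_iff: "p \<in> P \<Longrightarrow> conn (edges a b d b) (s,p) (s',q) \<longleftrightarrow> q \<in> cls (a \<union> d) p"
  using Eb_fwd[of "(s,p)" "(s',q)"] Eb_back by auto

end

lemma arc_or_orients: "arc_oriented M w \<Longrightarrow> orients M w"
  unfolding arc_oriented_def orients_def by blast

lemma class_core:
  assumes X: "arc_diagram X" and M2: "arc_diagram M2" and eX: "ends X = P" and eM: "ends M2 = P"
    and finP: "finite P" and p: "p \<in> P" and xy: "(x,y) \<in> X \<or> (x,y) \<in> M2" and x: "x \<in> cls (X \<union> M2) p"
  shows "odd (Ncnt X (cls (X \<union> M2) p) x) \<noteq> odd (Ncnt X (cls (X \<union> M2) p) y)"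
proof -
  define C where "C = cls (X \<union> M2) p"
  have eU: "ends (X \<union> M2) = P" using eX eM unfolding ends_def by blast
  have CP: "C \<subseteq> P" using cls_sub[OF eU p] C_def by simp
  have finC: "finite C" using finite_subset[OF CP finP] .
  have cl: "q \<in> C \<longleftrightarrow> r \<in> C" if "(q,r) \<in> X \<union> M2" for q r
  proof -
    have "(q,r) \<in> RM (X \<union> M2)" "(r,q) \<in> RM (X \<union> M2)" using that unfolding RM_def by auto
    then show ?thesis using cls_step C_def by blast
  qed
  have clX: "\<And>p q. (p,q) \<in> X \<Longrightarrow> p \<in> C \<longleftrightarrow> q \<in> C" using cl by blast
  have clM: "\<And>p q. (p,q) \<in> M2 \<Longrightarrow> p \<in> C \<longleftrightarrow> q \<in> C" using cl by blast
  from xy show ?thesis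
  proof
    assume "(x,y) \<in> X"
    then show ?thesis using parity_core[OF X X finC _ _ clX clX _ x[folded C_def]] CP eX unfolding C_def by blast
  next
    assume "(x,y) \<in> M2"
    then show ?thesis using parity_core[OF X M2 finC _ _ clX clM _ x[folded C_def]] CP eX eM unfolding C_def by blast
  qed
qed

context setting begin

definition "FW lam L v \<longleftrightarrow>
     (\<forall>p. lam p \<notin> {Some Down, Some Up} \<longrightarrow> v p = lam p) \<and>
     (\<forall>p. lam p \<in> {Some Down, Some Up} \<longrightarrow> v p \<in> {Some Down, Some Up}) \<and>
     arc_oriented a v \<and> arc_oriented d v \<and>
     (\<forall>p. lam p \<in> {Some Down, Some Up} \<and>
          p = Min (snd ` {u. conn (edges a b d b) (False, p) u}) \<longrightarrow>
          (v p = Some Down \<longleftrightarrow> L (False, p)))"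

lemma final_weight_FW: "final_weight a b d lam L = (THE v. FW lam L v)"
  unfolding final_weight_def FW_def by simp

lemma final_char:
  assumes Pdef: "P = {p. lam p \<in> {Some Down, Some Up}}"
  shows "FW lam L (final_weight a b d lam L)"
proof -
  have eU: "ends (a \<union> d) = P" using eA eD unfolding ends_def by blast
  define C where "C p = cls (a \<union> d) p" for p
  define sg where "sg p = odd (Ncnt a (C p) p)" for p
  define lab where "lab p = L (False, Min (C p))" for p
  define v0 where "v0 p = (if p \<in> P then Some (if lab p \<noteq> sg p then Down else Up) else lam p)" for p
  have CP: "C p \<subseteq> P" if "p \<in> P" for p using cls_sub[OF eU that] C_def by simp
  have finC: "finite (C p)" if "p \<in> P" for p using finite_subset[OF CP[OF that] finP] .
  have minC: "Min (C p) \<in> C p" if "p \<in> P" for p using Min_in[OF finC[OF that]] cls_self[of p] C_def by blast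
  have minP: "Min (C p) \<in> P" if "p \<in> P" for p using minC[OF that] CP[OF that] by blast
  have Ceq: "C q = C p" if "q \<in> C p" for p q using cls_eq that C_def by simp
  have Cmin: "C (Min (C p)) = C p" if "p \<in> P" for p using Ceq[OF minC[OF that]] .
  have comp: "snd ` {u. conn (edges a b d b) (False, p) u} = C p" if "p \<in> P" for p
    using Eb_comp[OF that] C_def by simp
  have arcP: "i \<in> P" "j \<in> P" if "(i,j) \<in> a \<or> (i,j) \<in> d" for i j
    using that eA eD unfolding ends_def by blast+
  have alt: "(v0 i = Some Down) \<noteq> (v0 j = Some Down) \<and> v0 i \<in> {Some Down, Some Up} \<and> v0 j \<in> {Some Down, Some Up}"
    if ij: "(i,j) \<in> a \<or> (i,j) \<in> d" for i j
  proof -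
    have iP: "i \<in> P" and jP: "j \<in> P" using arcP[OF ij] by auto
    have jC: "j \<in> C i"
    proof -
      have "(i,j) \<in> RM (a \<union> d)" using ij unfolding RM_def by auto
      then show ?thesis using cls_step[OF cls_self] C_def by blast
    qed
    have CC: "C j = C i" using Ceq[OF jC] .
    have "sg i \<noteq> sg j" unfolding sg_def CC using class_core[OF A D eA eD finP iP ij] cls_self[of i] C_def by simp
    moreover have "lab i = lab j" unfolding lab_def CC ..
    ultimately show ?thesis unfolding v0_def using iP jP by auto
  qed
  have aor: "arc_oriented M v0" if M: "M = a \<or> M = d" and eM: "ends M = P" for M
    unfolding arc_oriented_def
  proof (intro conjI ballI allI impI)
    fix e assume e: "e \<in> M"
    obtain i j where ij: "e = (i,j)" by force
    have "(i,j) \<in> a \<or> (i,j) \<in> d" using e M ij by auto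
    then have "(v0 i = Some Down) \<noteq> (v0 j = Some Down) \<and> v0 i \<in> {Some Down, Some Up} \<and> v0 j \<in> {Some Down, Some Up}"
      using alt by blast
    then have "{v0 i, v0 j} = {Some Down, Some Up}" by auto
    then show "case e of (i, j) \<Rightarrow> {v0 i, v0 j} = {Some Down, Some Up}" using ij by simp
  next
    fix p assume h: "v0 p \<in> {Some Down, Some Up}"
    have "p \<in> P" using h Pdef unfolding v0_def by (auto split: if_splits)
    then obtain q where "(p,q) \<in> M \<or> (q,p) \<in> M" using eM unfolding ends_def by blast
    then show "\<exists>(i, j)\<in>M. p = i \<or> p = j" by blast
  qed
  have FW0: "FW lam L v0"
    unfolding FW_def
  proof (intro conjI allI impI)
    fix p assume "lam p \<notin> {Some Down, Some Up}"
    then show "v0 p = lam p" unfolding v0_def using Pdef by simp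
  next
    fix p assume "lam p \<in> {Some Down, Some Up}"
    then show "v0 p \<in> {Some Down, Some Up}" unfolding v0_def using Pdef by simp
  next
    show "arc_oriented a v0" using aor eA by blast
    show "arc_oriented d v0" using aor eD by blast
  next
    fix p assume h: "lam p \<in> {Some Down, Some Up} \<and> p = Min (snd ` {u. conn (edges a b d b) (False, p) u})"
    then have pP: "p \<in> P" using Pdef by simp
    have pm: "p = Min (C p)" using h comp[OF pP] by simp
    have "Ncnt a (C p) p = 0"
    proof -
      have "{e\<in>a. fst e \<in> C p \<and> fst e < p \<and> p \<le> snd e} = {}"
        using Min_le[OF finC[OF pP]] pm by force
      then show ?thesis unfolding Ncnt_def by (metis card.empty)
    qed
    then have "\<not> sg p" unfolding sg_def by simp
    moreover have "lab p = L (False, p)" unfolding lab_def using pm by simp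
    ultimately show "(v0 p = Some Down) = L (False, p)" unfolding v0_def using pP by simp
  qed
  have uniq: "v = v0" if FWv: "FW lam L v" for v
  proof
    fix p
    show "v p = v0 p"
    proof (cases "p \<in> P")
      case False
      then show ?thesis using FWv Pdef unfolding FW_def v0_def by auto
    next
      case pP: True
      have oa: "orients a v" "orients d v" using FWv arc_or_orients unfolding FW_def by blast+
      have idn: "(v p = Some Down) = ((v (Min (C p)) = Some Down) \<noteq> sg p)"
        using ident[OF A D eA eD finP pP oa] unfolding C_def sg_def by simp
      have mP: "Min (C p) \<in> P" using minP[OF pP] .
      have "Min (C p) = Min (snd ` {u. conn (edges a b d b) (False, Min (C p)) u})"
        using comp[OF mP] Cmin[OF pP] by simp
      then have "(v (Min (C p)) = Some Down) = L (False, Min (C p))"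
        using FWv mP Pdef unfolding FW_def by blast
      then have "(v p = Some Down) = (lab p \<noteq> sg p)" using idn unfolding lab_def by simp
      moreover have "v p \<in> {Some Down, Some Up}" using FWv pP Pdef unfolding FW_def by blast
      ultimately show ?thesis unfolding v0_def using pP by auto
    qed
  qed
  have "(THE v. FW lam L v) = v0" using FW0 uniq by (rule the_equality)
  then show ?thesis using FW0 final_weight_FW by simp
qed

lemma final_L:
  assumes Pdef: "P = {p. lam p \<in> {Some Down, Some Up}}" and cs: "cons (edges a b d b) L"
    and FW: "FW lam L nu" and p: "p \<in> P"
  shows "L (s,p) = (nu (Min (cls (a \<union> d) p)) = Some Down)"
proof -
  have eU: "ends (a \<union> d) = P" using eA eD unfolding ends_def by blast
  define C where "C = cls (a \<union> d) p"
  have CP: "C \<subseteq> P" using cls_sub[OF eU p] C_def by simp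
  have finC: "finite C" using finite_subset[OF CP finP] .
  have mC: "Min C \<in> C" using Min_in[OF finC] cls_self[of p] C_def by blast
  have mP: "Min C \<in> P" using mC CP by blast
  have "conn (edges a b d b) (s,p) (False, Min C)" using Eb_back[OF p mC[unfolded C_def]] C_def by simp
  then have l: "L (s,p) = L (False, Min C)" using cs unfolding cons_def by blast
  have "C = snd ` {u. conn (edges a b d b) (False, Min C) u}"
    using Eb_comp[OF mP] cls_eq[OF mC[unfolded C_def]] C_def by simp
  then have "(nu (Min C) = Some Down) = L (False, Min C)" using FW mP Pdef unfolding FW_def by auto
  then show ?thesis using l C_def by simp
qed

end

definition cnt :: "weight \<Rightarrow> int \<Rightarrow> nat" where
  "cnt w v = card {p. p < v \<and> w p = Some Down}"

definition msr :: "int set \<Rightarrow> weight \<Rightarrow> nat" where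
  "msr P w = (\<Sum>p\<in>{p\<in>P. w p = Some Down}. nat (Max P - p))"

lemma dominance:
  assumes finP: "finite P"
    and d1: "\<And>p. (w1 p \<in> {Some Down, Some Up}) = (p \<in> P)"
    and d2: "\<And>p. (w2 p \<in> {Some Down, Some Up}) = (p \<in> P)"
    and ag: "\<And>p. p \<notin> P \<Longrightarrow> w1 p = w2 p"
    and le: "\<And>v. cnt w2 v \<le> cnt w1 v"
    and tot: "card {p. w1 p = Some Down} = card {p. w2 p = Some Down}"
  shows "bruhat_le w1 w2"
  using d1 ag le tot
proof (induction "msr P w1" arbitrary: w1 rule: less_induct)
  case less
  note d1 = less.prems(1) and ag = less.prems(2) and le = less.prems(3) and tot = less.prems(4)
  have DP1: "w1 p = Some Down \<Longrightarrow> p \<in> P" for p using d1[of p] by auto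
  have DP2: "w2 p = Some Down \<Longrightarrow> p \<in> P" for p using d2[of p] by auto
  have fD1: "finite {p. Q p \<and> w1 p = Some Down}" for Q
  proof -
    have "{p. Q p \<and> w1 p = Some Down} \<subseteq> P" using DP1 by blast
    then show ?thesis using finite_subset finP by blast
  qed
  have fD2: "finite {p. Q p \<and> w2 p = Some Down}" for Q
  proof -
    have "{p. Q p \<and> w2 p = Some Down} \<subseteq> P" using DP2 by blast
    then show ?thesis using finite_subset finP by blast
  qed
  show ?case
  proof (cases "w1 = w2")
    case True then show ?thesis unfolding bruhat_le_def by simp
  next
    case False
    define Df where "Df = {p. w1 p \<noteq> w2 p}"
    have DfP: "Df \<subseteq> P" unfolding Df_def using ag by blast
    have finDf: "finite Df" using finite_subset[OF DfP finP] .
    have neDf: "Df \<noteq> {}" using False unfolding Df_def by auto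
    define i where "i = Min Df"
    have iDf: "i \<in> Df" unfolding i_def using Min_in[OF finDf neDf] .
    have iP: "i \<in> P" using iDf DfP by blast
    have below: "w1 p = w2 p" if "p < i" for p
      using Min_le[OF finDf] that unfolding i_def Df_def by force
    define A1 where "A1 = {p. p < i \<and> w1 p = Some Down}"
    have A12: "{p. p < i \<and> w2 p = Some Down} = A1" unfolding A1_def using below by auto
    have finA1: "finite A1" unfolding A1_def using fD1 .
    have wi: "w1 i = Some Down \<and> w2 i = Some Up"
    proof -
      have c1: "{p. p < i + 1 \<and> w1 p = Some Down} = A1 \<union> {p. p = i \<and> w1 p = Some Down}"
        unfolding A1_def by auto
      have c2: "{p. p < i + 1 \<and> w2 p = Some Down} = A1 \<union> {p. p = i \<and> w2 p = Some Down}"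
        using A12 by auto
      have "card (A1 \<union> {p. p = i \<and> w2 p = Some Down}) \<le> card (A1 \<union> {p. p = i \<and> w1 p = Some Down})"
        using le[of "i+1"] c1 c2 unfolding cnt_def by simp
      moreover have "A1 \<inter> {p. p = i \<and> w1 p = Some Down} = {}" "A1 \<inter> {p. p = i \<and> w2 p = Some Down} = {}"
        unfolding A1_def by auto
      ultimately have "card {p. p = i \<and> w2 p = Some Down} \<le> card {p. p = i \<and> w1 p = Some Down}"
        using finA1 by (simp add: card_Un_disjoint)
      then have "w2 i = Some Down \<Longrightarrow> w1 i = Some Down"
        by (cases "w1 i = Some Down") (auto simp: Collect_conv_if)
      moreover have "w1 i \<noteq> w2 i" using iDf unfolding Df_def by simp
      moreover have "w1 i \<in> {Some Down, Some Up}" "w2 i \<in> {Some Down, Some Up}" using d1 d2 iP by auto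
      ultimately show ?thesis by auto
    qed
    define J where "J = {p. i < p \<and> w1 p = Some Up}"
    have JP: "J \<subseteq> P" unfolding J_def using d1 by auto
    have finJ: "finite J" using finite_subset[OF JP finP] .
    define B where "B = {p\<in>P. i < p}"
    have finB: "finite B" unfolding B_def using finP by simp
    have neJ: "J \<noteq> {}"
    proof
      assume J0: "J = {}"
      have "{p. w1 p = Some Down} = A1 \<union> {i} \<union> B"
      proof (rule set_eqI, rule iffI)
        fix p assume "p \<in> {p. w1 p = Some Down}"
        then show "p \<in> A1 \<union> {i} \<union> B" unfolding A1_def B_def using DP1 by force
      next
        fix p assume h: "p \<in> A1 \<union> {i} \<union> B"
        show "p \<in> {p. w1 p = Some Down}"
        proof (cases "p \<in> B")
          case True
          then have "p \<notin> J" using J0 by simp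
          then have "w1 p \<noteq> Some Up" using True unfolding J_def B_def by simp
          then show ?thesis using d1[of p] True unfolding B_def by auto
        next
          case False then show ?thesis using h wi unfolding A1_def by auto
        qed
      qed
      moreover have "A1 \<inter> {i} = {}" "(A1 \<union> {i}) \<inter> B = {}" unfolding A1_def B_def by auto
      ultimately have c1: "card {p. w1 p = Some Down} = card A1 + 1 + card B"
        using finA1 finB by (simp add: card_Un_disjoint)
      have "{p. w2 p = Some Down} \<subseteq> A1 \<union> B"
      proof
        fix p assume h: "p \<in> {p. w2 p = Some Down}"
        have "p \<noteq> i" using h wi by auto
        then show "p \<in> A1 \<union> B" using h A12 DP2 unfolding B_def by force
      qed
      then have "card {p. w2 p = Some Down} \<le> card (A1 \<union> B)" using finA1 finB by (simp add: card_mono)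
      also have "\<dots> \<le> card A1 + card B" by (rule card_Un_le)
      finally show False using c1 tot by simp
    qed
    define j where "j = Min J"
    have jJ: "j \<in> J" unfolding j_def using Min_in[OF finJ neJ] .
    have ij: "i < j" "w1 j = Some Up" using jJ unfolding J_def by auto
    have jP: "j \<in> P" using jJ JP by blast
    have between: "w1 p = Some Down" if "p \<in> P" "i \<le> p" "p < j" for p
    proof (cases "p = i")
      case True then show ?thesis using wi by simp
    next
      case False
      then have "p \<notin> J" using Min_le[OF finJ] that unfolding j_def by force
      then have "w1 p \<noteq> Some Up" using False that unfolding J_def by simp
      then show ?thesis using d1[of p] that by auto
    qed
    define w1' where "w1' = w1(i := Some Up, j := Some Down)"
    have stp: "bruhat_step w1 w1'" unfolding bruhat_step_def w1'_def using ij wi by blast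
    have d1': "(w1' p \<in> {Some Down, Some Up}) = (p \<in> P)" for p
      unfolding w1'_def using d1[of p] iP jP by auto
    have ag': "w1' p = w2 p" if "p \<notin> P" for p
      unfolding w1'_def using ag that iP jP by auto
    have Dn': "{p. w1' p = Some Down} = insert j ({p. w1 p = Some Down} - {i})"
      unfolding w1'_def using ij by auto
    have tot': "card {p. w1' p = Some Down} = card {p. w2 p = Some Down}"
    proof -
      have "card {p. w1' p = Some Down} = Suc (card ({p. w1 p = Some Down} - {i}))"
        unfolding Dn' using fD1[of "\<lambda>_. True"] ij by (simp add: card_insert_disjoint)
      also have "\<dots> = card {p. w1 p = Some Down}"
      proof -
        have "finite {p. w1 p = Some Down}" using fD1[of "\<lambda>_. True"] by simp
        moreover have "i \<in> {p. w1 p = Some Down}" using wi by simp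
        ultimately show ?thesis by (rule card_Suc_Diff1)
      qed
      finally show ?thesis using tot by simp
    qed
    have le': "cnt w2 v \<le> cnt w1' v" for v
    proof -
      consider (a) "v \<le> i" | (b) "i < v" "v \<le> j" | (c) "j < v" by linarith
      then show ?thesis
      proof cases
        case a
        then have "{p. p < v \<and> w1' p = Some Down} = {p. p < v \<and> w1 p = Some Down}"
          unfolding w1'_def using ij by auto
        then show ?thesis using le[of v] unfolding cnt_def by simp
      next
        case c
        have "{p. p < v \<and> w1' p = Some Down} = insert j ({p. p < v \<and> w1 p = Some Down} - {i})"
          unfolding w1'_def using ij c by auto
        moreover have "i \<in> {p. p < v \<and> w1 p = Some Down}" using wi ij c by simp
        moreover have "j \<notin> {p. p < v \<and> w1 p = Some Down} - {i}" using ij by simp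
        moreover have fv: "finite {p. p < v \<and> w1 p = Some Down}" using fD1[of "\<lambda>p. p < v"] .
        ultimately have "card {p. p < v \<and> w1' p = Some Down} = Suc (card ({p. p < v \<and> w1 p = Some Down} - {i}))"
          by (simp add: card_insert_disjoint)
        also have "\<dots> = card {p. p < v \<and> w1 p = Some Down}"
        proof -
          have iv: "i \<in> {p. p < v \<and> w1 p = Some Down}" using wi ij c by simp
          show ?thesis using card_Suc_Diff1[OF fv iv] .
        qed
        finally have "card {p. p < v \<and> w1' p = Some Down} = card {p. p < v \<and> w1 p = Some Down}" .
        then show ?thesis using le[of v] unfolding cnt_def by simp
      next
        case b
        define Bv where "Bv = {p\<in>P. i < p \<and> p < v}"
        have finBv: "finite Bv" unfolding Bv_def using finP by simp
        have e1: "{p. p < v \<and> w1 p = Some Down} = A1 \<union> insert i Bv"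
        proof (rule set_eqI, rule iffI)
          fix p assume "p \<in> {p. p < v \<and> w1 p = Some Down}"
          then show "p \<in> A1 \<union> insert i Bv" unfolding A1_def Bv_def using DP1 by force
        next
          fix p assume "p \<in> A1 \<union> insert i Bv"
          then show "p \<in> {p. p < v \<and> w1 p = Some Down}"
            unfolding A1_def Bv_def using b wi between by auto
        qed
        have dis: "A1 \<inter> insert i Bv = {}" unfolding A1_def Bv_def by auto
        have iBv: "i \<notin> Bv" unfolding Bv_def by simp
        have c1: "cnt w1 v = card A1 + Suc (card Bv)"
          unfolding cnt_def e1 using finA1 finBv dis iBv by (simp add: card_Un_disjoint)
        have "{p. p < v \<and> w1' p = Some Down} = {p. p < v \<and> w1 p = Some Down} - {i}"
          unfolding w1'_def using ij b by auto
        moreover have "(A1 \<union> insert i Bv) - {i} = A1 \<union> Bv" using iBv unfolding A1_def by auto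
        moreover have "A1 \<inter> Bv = {}" using dis by auto
        ultimately have c1': "cnt w1' v = card A1 + card Bv"
          unfolding cnt_def e1 using finA1 finBv by (simp add: card_Un_disjoint)
        have "{p. p < v \<and> w2 p = Some Down} \<subseteq> A1 \<union> Bv"
        proof
          fix p assume h: "p \<in> {p. p < v \<and> w2 p = Some Down}"
          have "p \<noteq> i" using h wi by auto
          then show "p \<in> A1 \<union> Bv" using h A12 DP2 unfolding Bv_def by force
        qed
        then have "cnt w2 v \<le> card (A1 \<union> Bv)" unfolding cnt_def using finA1 finBv by (simp add: card_mono)
        also have "\<dots> \<le> card A1 + card Bv" by (rule card_Un_le)
        finally show ?thesis using c1' by simp
      qed
    qed
    have lt: "msr P w1' < msr P w1"
    proof -
      let ?f = "\<lambda>p. nat (Max P - p)"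
      have Dn1: "{p\<in>P. w1' p = Some Down} = insert j ({p\<in>P. w1 p = Some Down} - {i})"
        unfolding w1'_def using ij jP by auto
      have fin1: "finite {p\<in>P. w1 p = Some Down}" using finP by simp
      have iin: "i \<in> {p\<in>P. w1 p = Some Down}" using iP wi by simp
      have "msr P w1' = ?f j + sum ?f ({p\<in>P. w1 p = Some Down} - {i})"
        unfolding msr_def Dn1 using fin1 ij by (simp add: sum.insert)
      also have "sum ?f ({p\<in>P. w1 p = Some Down} - {i}) = msr P w1 - ?f i"
        unfolding msr_def using sum_diff1_nat[of ?f "{p\<in>P. w1 p = Some Down}" i] iin by simp
      also have "?f i \<le> msr P w1" unfolding msr_def using fin1 iin by (intro member_le_sum) auto
      moreover have "?f j < ?f i" using ij Max_ge[OF finP jP] by simp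
      ultimately show ?thesis by linarith
    qed
    have "bruhat_le w1' w2" using less.hyps[OF lt d1' ag' le' tot'] by blast
    then show ?thesis using stp unfolding bruhat_le_def by (simp add: converse_rtranclp_into_rtranclp)
  qed
qed

lemma orients_D2: "orients M w \<Longrightarrow> (p,q) \<in> M \<Longrightarrow> w p \<noteq> Some Down \<Longrightarrow> w q = Some Down"
  unfolding orients_def by (auto simp: doubleton_eq_iff)
lemma orients_D3: "orients M w \<Longrightarrow> (p,q) \<in> M \<Longrightarrow> w q \<noteq> Some Down \<Longrightarrow> w p = Some Down"
  unfolding orients_def by (auto simp: doubleton_eq_iff)

lemma downs_image:
  assumes X: "arc_diagram X" and o: "orients X w" and dn: "\<And>p. w p = Some Down \<Longrightarrow> p \<in> ends X"
  defines "g \<equiv> \<lambda>e. if w (fst e) = Some Down then fst e else snd e"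
  shows "{p. w p = Some Down} = g ` X" "inj_on g X" "\<And>e. e \<in> X \<Longrightarrow> w (g e) = Some Down"
proof -
  show gD: "\<And>e. e \<in> X \<Longrightarrow> w (g e) = Some Down"
  proof -
    fix e assume e: "e \<in> X"
    show "w (g e) = Some Down"
    proof (cases "w (fst e) = Some Down")
      case True then show ?thesis unfolding g_def by simp
    next
      case False then show ?thesis unfolding g_def using orients_D2[OF o, of "fst e" "snd e"] e by simp
    qed
  qed
  show "{p. w p = Some Down} = g ` X"
  proof (rule set_eqI, rule iffI)
    fix p assume "p \<in> {p. w p = Some Down}"
    then have wp: "w p = Some Down" by simp
    obtain q where "(p,q) \<in> X \<or> (q,p) \<in> X" using dn[OF wp] unfolding ends_def by blast
    then show "p \<in> g ` X"
    proof
      assume "(p,q) \<in> X" then show ?thesis using wp unfolding g_def by force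
    next
      assume h: "(q,p) \<in> X"
      then have "w q \<noteq> Some Down" using orients_D[OF o h] wp by simp
      then have "g (q,p) = p" unfolding g_def by simp
      then show ?thesis using h by force
    qed
  next
    fix p assume "p \<in> g ` X" then show "p \<in> {p. w p = Some Down}" using gD by blast
  qed
  show "inj_on g X"
  proof (rule inj_onI, rule ccontr)
    fix e e' assume h: "e \<in> X" "e' \<in> X" "g e = g e'" "e \<noteq> e'"
    note f = arc_facts[OF X h(1,2,4)]
    show False using h(3) f unfolding g_def by (auto split: if_splits)
  qed
qed

lemma total_down:
  assumes X: "arc_diagram X" and o: "orients X w" and dn: "\<And>p. w p = Some Down \<Longrightarrow> p \<in> ends X"
  shows "card {p. w p = Some Down} = card X"
  using downs_image[OF X o dn] card_image by metis

lemma cnt_arcs: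
  assumes X: "arc_diagram X" and o: "orients X w" and dn: "\<And>p. w p = Some Down \<Longrightarrow> p \<in> ends X"
  shows "cnt w v = card {e\<in>X. snd e < v} + card {e\<in>X. over v e \<and> w (fst e) = Some Down}"
proof -
  define g where "g e = (if w (fst e) = Some Down then fst e else snd e)" for e
  note di = downs_image[OF X o dn, folded g_def]
  have lt: "fst e < snd e" if "e \<in> X" for e using arc_facts[OF X] that
    by (metis arc_lt prod.collapse X)
  have "{p. p < v \<and> w p = Some Down} = g ` ({e\<in>X. snd e < v} \<union> {e\<in>X. over v e \<and> w (fst e) = Some Down})"
  proof (rule set_eqI, rule iffI)
    fix p assume h: "p \<in> {p. p < v \<and> w p = Some Down}"
    then obtain e where e: "e \<in> X" "p = g e" using di(1) by blast
    show "p \<in> g ` ({e\<in>X. snd e < v} \<union> {e\<in>X. over v e \<and> w (fst e) = Some Down})"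
    proof (cases "w (fst e) = Some Down")
      case True
      then have "p = fst e" using e unfolding g_def by simp
      then have "e \<in> {e\<in>X. snd e < v} \<union> {e\<in>X. over v e \<and> w (fst e) = Some Down}"
        using h e True unfolding over_def by auto
      then show ?thesis using e by blast
    next
      case False
      then have "p = snd e" using e unfolding g_def by simp
      then have "e \<in> {e\<in>X. snd e < v}" using h e by auto
      then show ?thesis using e by blast
    qed
  next
    fix p assume "p \<in> g ` ({e\<in>X. snd e < v} \<union> {e\<in>X. over v e \<and> w (fst e) = Some Down})"
    then obtain e where e: "e \<in> X" "p = g e" "snd e < v \<or> (over v e \<and> w (fst e) = Some Down)" by blast
    have "w p = Some Down" using di(3) e by simp
    moreover have "p < v" using e lt[OF e(1)] unfolding g_def over_def by (auto split: if_splits)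
    ultimately show "p \<in> {p. p < v \<and> w p = Some Down}" by simp
  qed
  moreover have "inj_on g ({e\<in>X. snd e < v} \<union> {e\<in>X. over v e \<and> w (fst e) = Some Down})"
    using di(2) by (rule inj_on_subset) auto
  moreover have "finite X" using arc_finite[OF X] .
  moreover have "{e\<in>X. snd e < v} \<inter> {e\<in>X. over v e \<and> w (fst e) = Some Down} = {}"
    unfolding over_def by auto
  ultimately show ?thesis unfolding cnt_def by (simp add: card_image card_Un_disjoint)
qed

lemma ends_oriented: "arc_oriented M w \<Longrightarrow> ends M = {p. w p \<in> {Some Down, Some Up}}"
  unfolding arc_oriented_def ends_def by (auto simp: doubleton_eq_iff)

lemma block_fix:
  assumes "same_block w0 v" "v p \<notin> {Some Down, Some Up}"
  shows "v p = w0 p"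
proof -
  obtain pi where pi: "bij pi" "\<forall>i. pi i \<noteq> i \<longrightarrow> w0 i \<in> {Some Down, Some Up}" "v = w0 \<circ> pi"
    using assms(1) unfolding same_block_def by blast
  show ?thesis
  proof (cases "pi p = p")
    case True then show ?thesis using pi by simp
  next
    case False
    have "pi (pi p) \<noteq> pi p" using False bij_is_inj[OF pi(1)] by (metis injD)
    then have "w0 (pi p) \<in> {Some Down, Some Up}" using pi(2) by blast
    then show ?thesis using assms(2) pi(3) by simp
  qed
qed

lemma block_fix2:
  assumes "same_block w0 v" "w0 p \<notin> {Some Down, Some Up}"
  shows "v p = w0 p"
proof -
  obtain pi where pi: "bij pi" "\<forall>i. pi i \<noteq> i \<longrightarrow> w0 i \<in> {Some Down, Some Up}" "v = w0 \<circ> pi"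
    using assms(1) unfolding same_block_def by blast
  have "pi p = p" using pi(2) assms(2) by blast
  then show ?thesis using pi by simp
qed

lemma block_step:
  assumes sb: "same_block w0 v" and st: "bruhat_step v v'"
  shows "same_block w0 v'"
proof -
  obtain pi where pi: "bij pi" "finite {i. pi i \<noteq> i}" "\<forall>i. pi i \<noteq> i \<longrightarrow> w0 i \<in> {Some Down, Some Up}" "v = w0 \<circ> pi"
    using sb unfolding same_block_def by blast
  obtain i j where ij: "i < j" "v i = Some Down" "v j = Some Up" "v' = v(i := Some Up, j := Some Down)"
    using st unfolding bruhat_step_def by blast
  define tau where "tau x = (if x = i then j else if x = j then i else x)" for x
  have tt: "tau (tau x) = x" for x unfolding tau_def by auto
  have btau: "bij tau" by (metis bijI' tt)
  have v': "v' = w0 \<circ> (pi \<circ> tau)" unfolding ij(4) pi(4) using ij(1-3) pi(4)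
    by (auto simp: tau_def fun_eq_iff)
  have "{x. (pi \<circ> tau) x \<noteq> x} \<subseteq> {x. pi x \<noteq> x} \<union> {i,j}" unfolding tau_def by auto
  then have fin: "finite {x. (pi \<circ> tau) x \<noteq> x}" using pi(2) finite_subset by blast
  have du: "w0 x \<in> {Some Down, Some Up}" if "(pi \<circ> tau) x \<noteq> x" for x
  proof (cases "x = i \<or> x = j")
    case True
    show ?thesis
    proof (cases "pi x = x")
      case True
      then have "w0 x = v x" using pi(4) by simp
      then show ?thesis using \<open>x = i \<or> x = j\<close> ij by auto
    next
      case False then show ?thesis using pi(3) by blast
    qed
  next
    case False
    then have "pi x \<noteq> x" using that unfolding tau_def by simp
    then show ?thesis using pi(3) by blast
  qed
  show ?thesis unfolding same_block_def
    using bij_comp[OF btau pi(1)] fin du v' by blast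
qed

lemma block_le: "bruhat_le v v' \<Longrightarrow> same_block w0 v \<Longrightarrow> same_block w0 v'"
  unfolding bruhat_le_def
proof (induction rule: rtranclp_induct)
  case base then show ?case .
next
  case (step y z) then show ?case using block_step by blast
qed

theorem corollary3p2:
  fixes \<Lambda> :: "weight set" and n :: nat
    and a b c d a' d' :: "(int \<times> int) set" and lam mu nu :: weight
    and ord :: "(int \<times> int) list"
  assumes "khovanov_block n \<Lambda>"
    and "basis_vec \<Lambda> (a, lam, b)" and "basis_vec \<Lambda> (c, mu, d)"
    and "admissible_order b ord"
    and "khov_mult ord (a, lam, b) (c, mu, d) (a', nu, d') \<noteq> (0 :: 'k :: comm_ring_1)"
  shows "a' = a \<and> d' = d \<and> nu \<in> \<Lambda> \<and> basis_vec \<Lambda> (a', nu, d') \<and>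
         bruhat_le lam nu \<and> bruhat_le mu nu"
proof -
  have A: "arc_diagram a" and B: "arc_diagram b" and lamL: "lam \<in> \<Lambda>"
    and oal: "arc_oriented a lam" and obl: "arc_oriented b lam"
    using assms(2) unfolding basis_vec_def by auto
  have C: "arc_diagram c" and D: "arc_diagram d" and muL: "mu \<in> \<Lambda>"
    and ocm: "arc_oriented c mu" and odm: "arc_oriented d mu"
    using assms(3) unfolding basis_vec_def by auto
  define L0 where "L0 = init_labels a b d lam mu"
  define lst where "lst = filter (\<lambda>L. final_weight a b d lam L = nu) (surg a b d {} L0 ord)"
  have km: "b = c \<and> a' = a \<and> d' = d \<and> length lst \<noteq> 0"
  proof (rule ccontr)
    assume "\<not> (b = c \<and> a' = a \<and> d' = d \<and> length lst \<noteq> 0)"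
    then have "khov_mult ord (a, lam, b) (c, mu, d) (a', nu, d') = (0 :: 'k)"
      unfolding khov_mult_def lst_def L0_def by auto
    then show False using assms(5) by simp
  qed
  then have bc: "c = b" and a'a: "a' = a" and d'd: "d' = d" by auto
  obtain L where Lin: "L \<in> set (surg a b d {} L0 ord)" and nuL: "final_weight a b d lam L = nu"
  proof -
    have "lst \<noteq> []" using km by auto
    then obtain x where "x \<in> set lst" by (meson list.set_sel(1))
    then show ?thesis using that unfolding lst_def by auto
  qed
  define P where "P = {p. lam p \<in> {Some Down, Some Up}}"
  have eA: "ends a = P" using ends_oriented[OF oal] P_def by simp
  have eB: "ends b = P" using ends_oriented[OF obl] P_def by simp
  have eBmu: "ends b = {p. mu p \<in> {Some Down, Some Up}}" using ends_oriented[OF ocm] bc by simp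
  have eD: "ends d = P" using ends_oriented[OF odm] eBmu eB by simp
  interpret setting a b d P using A B D eA eB eD by unfold_locales
  have adm: "distinct ord" "set ord = b" using assms(4) unfolding admissible_order_def by auto
  have sm: "cons (edges a b d b) L \<and> Phi s (edges a b d b) L X v \<le> Phi s (edges a b d {}) L0 X v"
    if "arc_diagram X" for s X v
    using surg_main[of "{}" ord X L0 L s v] adm that init_cons Lin unfolding L0_def by simp
  have csL: "cons (edges a b d b) L" using sm[OF A] by blast
  have FW: "FW lam L nu" using final_char[OF P_def, of L] nuL by simp
  have nu_out: "nu p = lam p" if "p \<notin> P" for p using FW that unfolding FW_def P_def by auto
  have nu_in: "nu p \<in> {Some Down, Some Up}" if "p \<in> P" for p using FW that unfolding FW_def P_def by auto
  have oan: "arc_oriented a nu" and odn: "arc_oriented d nu" using FW unfolding FW_def by auto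
  have nuP: "(nu p \<in> {Some Down, Some Up}) = (p \<in> P)" for p
    using nu_out[of p] nu_in[of p] P_def by (cases "p \<in> P") auto
  have lamP: "(lam p \<in> {Some Down, Some Up}) = (p \<in> P)" for p using P_def by simp
  have muP: "(mu p \<in> {Some Down, Some Up}) = (p \<in> P)" for p using eBmu eB by blast
  have o1: "orients a lam" "orients b lam" "orients d mu" "orients b mu" "orients a nu" "orients d nu"
    using arc_or_orients oal obl odm ocm bc oan odn by auto
  have dnA: "\<And>p. w p = Some Down \<Longrightarrow> p \<in> ends a" if "\<And>p. (w p \<in> {Some Down, Some Up}) = (p \<in> P)" for w
    using that eA by auto
  have dnD: "\<And>p. w p = Some Down \<Longrightarrow> p \<in> ends d" if "\<And>p. (w p \<in> {Some Down, Some Up}) = (p \<in> P)" for w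
    using that eD by auto
  have phi1: "Phi False (edges a b d {}) L0 a v = card {e\<in>a. over v e \<and> lam (fst e) = Some Down}" for v
  proof -
    have "\<And>e. e \<in> a \<Longrightarrow> Dv False (edges a b d {}) L0 a e = (lam (fst e) = Some Down)"
      using dv_ident[OF A B eA eB finP o1(1) o1(2), of "edges a b d {}" False L0]
        E0_conn_iff[of False] init_val unfolding L0_def by simp
    then show ?thesis unfolding Phi_def by (intro arg_cong[where f=card]) auto
  qed
  have phi2: "Phi False (edges a b d b) L a v = card {e\<in>a. over v e \<and> nu (fst e) = Some Down}" for v
  proof -
    have "\<And>e. e \<in> a \<Longrightarrow> Dv False (edges a b d b) L a e = (nu (fst e) = Some Down)"
      using dv_ident[OF A D eA eD finP o1(5) o1(6), of "edges a b d b" False L]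
        Eb_conn_iff final_L[OF P_def csL FW] by simp
    then show ?thesis unfolding Phi_def by (intro arg_cong[where f=card]) auto
  qed
  have phi3: "Phi True (edges a b d {}) L0 d v = card {e\<in>d. over v e \<and> mu (fst e) = Some Down}" for v
  proof -
    have "\<And>e. e \<in> d \<Longrightarrow> Dv True (edges a b d {}) L0 d e = (mu (fst e) = Some Down)"
      using dv_ident[OF D B eD eB finP o1(3) o1(4), of "edges a b d {}" True L0]
        E0_conn_iff[of True] init_val unfolding L0_def by simp
    then show ?thesis unfolding Phi_def by (intro arg_cong[where f=card]) auto
  qed
  have phi4: "Phi True (edges a b d b) L d v = card {e\<in>d. over v e \<and> nu (fst e) = Some Down}" for v
  proof -
    have "\<And>e. e \<in> d \<Longrightarrow> Dv True (edges a b d b) L d e = (nu (fst e) = Some Down)"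
      using dv_ident[OF D A eD eA finP o1(6) o1(5), of "edges a b d b" True L]
        Eb_conn_iff final_L[OF P_def csL FW] by (simp add: Un_commute)
    then show ?thesis unfolding Phi_def by (intro arg_cong[where f=card]) auto
  qed
  have le1: "cnt nu v \<le> cnt lam v" for v
    using cnt_arcs[OF A o1(5) dnA[OF nuP]] cnt_arcs[OF A o1(1) dnA[OF lamP]]
      sm[OF A, of False v] phi1 phi2 by simp
  have le2: "cnt nu v \<le> cnt mu v" for v
    using cnt_arcs[OF D o1(6) dnD[OF nuP]] cnt_arcs[OF D o1(3) dnD[OF muP]]
      sm[OF D, of True v] phi3 phi4 by simp
  have t1: "card {p. lam p = Some Down} = card {p. nu p = Some Down}"
    using total_down[OF A o1(1) dnA[OF lamP]] total_down[OF A o1(5) dnA[OF nuP]] by simp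
  have t2: "card {p. mu p = Some Down} = card {p. nu p = Some Down}"
    using total_down[OF D o1(3) dnD[OF muP]] total_down[OF D o1(6) dnD[OF nuP]] by simp
  have br1: "bruhat_le lam nu"
    using dominance[OF finP lamP nuP _ le1 t1] nu_out by metis
  obtain w0 where w0: "is_weight w0" "\<Lambda> = {v. is_weight v \<and> same_block w0 v}"
    and bnd: "\<forall>v\<in>\<Lambda>. bounded_weight v"
    using assms(1) unfolding khovanov_block_def by blast
  have sbl: "same_block w0 lam" and sbm: "same_block w0 mu" using lamL muL w0 by auto
  have lm: "lam p = mu p" if "p \<notin> P" for p
  proof -
    have "lam p \<notin> {Some Down, Some Up}" using that P_def by simp
    then have l0: "lam p = w0 p" using block_fix[OF sbl] by blast
    then have "w0 p \<notin> {Some Down, Some Up}" using that P_def by simp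
    then show ?thesis using block_fix2[OF sbm] l0 by simp
  qed
  have br2: "bruhat_le mu nu"
    using dominance[OF finP muP nuP _ le2 t2] nu_out lm by metis
  have sbn: "same_block w0 nu" using block_le[OF br1 sbl] .
  have domeq: "(nu p = None) = (lam p = None)" for p
    using nu_out[of p] nu_in[of p] P_def by (cases "p \<in> P") auto
  have iwl: "is_weight lam" using lamL w0 by auto
  have fl: "finite (dom lam)" using bnd lamL unfolding bounded_weight_def by auto
  have "dom nu = dom lam" unfolding dom_def using domeq by simp
  then have iwn: "is_weight nu"
    using iwl fl domeq unfolding is_weight_def
    by (intro conjI) (metis, rule exI[of _ "dom nu"], auto)
  have nuL: "nu \<in> \<Lambda>" using iwn sbn w0 by simp
  have "basis_vec \<Lambda> (a', nu, d')" unfolding basis_vec_def a'a d'd using A D nuL oan odn by simp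
  then show ?thesis using a'a d'd nuL br1 br2 by simp
qed

end
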